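(* For $[\mathfrak{p}]\in\mathfrak{F}_4''$ with $\mathfrak{p}=(p_1,p_2,p_3,p_4)$, put $\mathbb{X}_1=\mathbb{X}(p_1,p_2,p_3,p_4)$, $\mathbb{X}_2=\mathbb{X}(p_1,p_3,p_2,p_4)$ and $\mathbb{A}=\mathbb{A}(p_1,p_2,p_3)$. Then $\mathbb{A}\in(-\pi/2,\pi/2)$ and $$|\mathbb{X}_1+\mathbb{X}_2-1|^2=2\Re\left(\mathbb{X}_1\overline{\mathbb{X}_2}(1+e^{-2i\mathbb{A}})\right),$$ with $\mathbb{X}_1+\mathbb{X}_2-1\neq0$, $\Re(\mathbb{X}_1\overline{\mathbb{X}_2}e^{-i\mathbb{A}})>0$ and $\arg(\mathbb{X}_1/\mathbb{X}_2)\neq 2\mathbb{A}$. Moreover, the map $B_0:\mathfrak{F}_4''\to\mathfrak{V}_4$, $B_0([\mathfrak p])=(\mathbb{X}_1,\mathbb{X}_2,\mathbb{A})$, is well defined and bijective, where $\mathfrak{V}_4$ is the set of $(w_1,w_2,a)\in\mathbb{C}^2\times(-\pi/2,\pi/2)$ with $|w_1+w_2-1|^2=2\Re(w_1\overline{w_2}(1+e^{-2ia}))$, $w_1+w_2-1\neq0$, $\Re(w_1\overline{w_2}e^{-ia})>0$ and $\arg(w_1/w_2)\neq 2a$.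
   Context: Let $\mathbb{C}^{2,1}$ denote $\mathbb{C}^3$ with the Hermitian form $\langle \mathbf z,\mathbf w\rangle=z_1\overline{w_3}+z_2\overline{w_2}+z_3\overline{w_1}$. The boundary $\partial\mathbf{H}^2_\mathbb{C}$ is the set of complex lines of null vectors, identified with $(\mathbb{C}\times\mathbb{R})\cup\{\infty\}$, $(z,t)$ corresponding to the line of $(-|z|^2+it,\sqrt2 z,1)^T$ and $\infty$ to that of $(1,0,0)^T$; ${\rm PU}(2,1)$ acts on it. A $\mathbb{C}$-circle is the intersection of $\partial\mathbf{H}^2_\mathbb{C}$ with the projectivisation of a complex 2-dimensional subspace of signature $(1,1)$. Cartan's angular invariant: $\mathbb{A}(p_1,p_2,p_3)=\arg(-\langle\mathbf p_1,\mathbf p_2\rangle\langle\mathbf p_2,\mathbf p_3\rangle\langle\mathbf p_3,\mathbf p_1\rangle)\in[-\pi/2,\pi/2]$ for lifts $\mathbf p_i$. The Korányi–Reimann complex cross-ratio of four distinct points is $\mathbb{X}(p_1,p_2,p_3,p_4)=\frac{\langle\mathbf p_4,\mathbf p_2\rangle\langle\mathbf p_3,\mathbf p_1\rangle}{\langle\mathbf p_4,\mathbf p_1\rangle\langle\mathbf p_3,\mathbf p_2\rangle}$ (independent of lifts, ${\rm PU}(2,1)$-invariant). $\mathfrak{C}_4''$ is the set of ordered quadruples of pairwise distinct boundary points such that $p_1,p_2,p_3$ do not lie on a common $\mathbb{C}$-circle, $p_2,p_3,p_4$ do not lie on a common $\mathbb{C}$-circle, and $p_4$ is not in the orbit of $p_1$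 under the stabiliser of $p_2,p_3$ in ${\rm PU}(2,1)$; $\mathfrak{F}_4''=\mathfrak{C}_4''/{\rm PU}(2,1)$. *)

theory Defs
  imports "HOL-Analysis.Analysis"
begin

definition herm :: "complex^3 \<Rightarrow> complex^3 \<Rightarrow> complex" where
  "herm z w = z$1 * cnj (w$3) + z$2 * cnj (w$2) + z$3 * cnj (w$1)"

text \<open>Boundary points of complex hyperbolic plane, identified with
  (C x R) \<union> {infinity}: None is infinity, Some (z,t) is (z,t).\<close>

type_synonym bpt = "(complex \<times> real) option"

definition lift :: "bpt \<Rightarrow> complex^3" where
  "lift p = (case p of
      None \<Rightarrow> vector [1, 0, 0]
    | Some (z, t) \<Rightarrow> vector [- complex_of_real ((cmod z)\<^sup>2) + \<i> * complex_of_real t,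
                            complex_of_real (sqrt 2) * z, 1])"

text \<open>U(2,1): linear maps preserving the Hermitian form. PU(2,1) is its quotient
  by scalars, which acts on boundary points in the same way.\<close>

definition U21 :: "(complex^3^3) set" where
  "U21 = {A. \<forall>v w. herm (A *v v) (A *v w) = herm v w}"

definition maps_to :: "complex^3^3 \<Rightarrow> bpt \<Rightarrow> bpt \<Rightarrow> bool" where
  "maps_to A p q \<longleftrightarrow> (\<exists>c. c \<noteq> 0 \<and> A *v lift p = c *s lift q)"

type_synonym quad = "bpt \<times> bpt \<times> bpt \<times> bpt"

definition PU_equiv :: "quad \<Rightarrow> quad \<Rightarrow> bool" where
  "PU_equiv P Q \<longleftrightarrow> (case P of (p1, p2, p3, p4) \<Rightarrow> case Q of (q1, q2, q3, q4) \<Rightarrow>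
     (\<exists>A\<in>U21. maps_to A p1 q1 \<and> maps_to A p2 q2 \<and> maps_to A p3 q3 \<and> maps_to A p4 q4))"

text \<open>Three boundary points lie on a common C-circle: their lifts lie in a complex
  2-dimensional subspace of signature (1,1), i.e. one spanned by u, v with
  <u,u> > 0, <v,v> < 0, <u,v> = 0.\<close>

definition on_common_C_circle :: "bpt \<Rightarrow> bpt \<Rightarrow> bpt \<Rightarrow> bool" where
  "on_common_C_circle p q r \<longleftrightarrow>
     (\<exists>u v. Re (herm u u) > 0 \<and> Re (herm v v) < 0 \<and> herm u v = 0 \<and>
        (\<forall>x\<in>{p, q, r}. \<exists>a b. lift x = a *s u + b *s v))"

definition in_stab_orbit :: "bpt \<Rightarrow> bpt \<Rightarrow> bpt \<Rightarrow> bpt \<Rightarrow> bool" where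
  "in_stab_orbit p2 p3 p1 p4 \<longleftrightarrow>
     (\<exists>A\<in>U21. maps_to A p2 p2 \<and> maps_to A p3 p3 \<and> maps_to A p1 p4)"

definition C4pp :: "quad set" where
  "C4pp = {(p1, p2, p3, p4). distinct [p1, p2, p3, p4] \<and>
             \<not> on_common_C_circle p1 p2 p3 \<and> \<not> on_common_C_circle p2 p3 p4 \<and>
             \<not> in_stab_orbit p2 p3 p1 p4}"

definition PU_rel :: "(quad \<times> quad) set" where
  "PU_rel = {(P, Q). P \<in> C4pp \<and> Q \<in> C4pp \<and> PU_equiv P Q}"

definition F4pp :: "quad set set" where
  "F4pp = C4pp // PU_rel"

definition cartan :: "bpt \<Rightarrow> bpt \<Rightarrow> bpt \<Rightarrow> real" where
  "cartan p1 p2 p3 = Arg (- herm (lift p1) (lift p2) * herm (lift p2) (lift p3) * herm (lift p3) (lift p1))"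

definition crossratio :: "bpt \<Rightarrow> bpt \<Rightarrow> bpt \<Rightarrow> bpt \<Rightarrow> complex" where
  "crossratio p1 p2 p3 p4 =
     (herm (lift p4) (lift p2) * herm (lift p3) (lift p1)) /
     (herm (lift p4) (lift p1) * herm (lift p3) (lift p2))"

definition B0 :: "quad \<Rightarrow> complex \<times> complex \<times> real" where
  "B0 P = (case P of (p1, p2, p3, p4) \<Rightarrow>
     (crossratio p1 p2 p3 p4, crossratio p1 p3 p2 p4, cartan p1 p2 p3))"

definition V4 :: "(complex \<times> complex \<times> real) set" where
  "V4 = {(w1, w2, a). a \<in> {-pi/2<..<pi/2} \<and>
          (cmod (w1 + w2 - 1))\<^sup>2 = 2 * Re (w1 * cnj w2 * (1 + exp (- 2 * \<i> * complex_of_real a))) \<and>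
          w1 + w2 - 1 \<noteq> 0 \<and>
          Re (w1 * cnj w2 * exp (- \<i> * complex_of_real a)) > 0 \<and>
          Arg (w1 / w2) \<noteq> 2 * a}"

end

theory Submission
  imports Defs
begin


definition det3 :: "complex^3 \<Rightarrow> complex^3 \<Rightarrow> complex^3 \<Rightarrow> complex" where
  "det3 u v w = u$1*(v$2*w$3 - v$3*w$2) - u$2*(v$1*w$3 - v$3*w$1) + u$3*(v$1*w$2 - v$2*w$1)"

lemma herm_conj: "herm y x = cnj (herm x y)"
  by (simp add: herm_def)

lemma herm_left3: "herm (a *s x + b *s y + c *s z) w = a * herm x w + b * herm y w + c * herm z w"
  by (simp add: herm_def algebra_simps)

lemma herm_right3: "herm w (a *s x + b *s y + c *s z) = cnj a * herm w x + cnj b * herm w y + cnj c * herm w z"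
  by (simp add: herm_def algebra_simps)

lemma herm_smult_left: "herm (a *s x) w = a * herm x w"
  by (simp add: herm_def algebra_simps)
lemma herm_smult_right: "herm w (a *s x) = cnj a * herm w x"
  by (simp add: herm_def algebra_simps)
lemma herm_diff_left: "herm (x - y) w = herm x w - herm y w"
  by (simp add: herm_def algebra_simps)
lemma herm_add_left: "herm (x + y) w = herm x w + herm y w"
  by (simp add: herm_def algebra_simps)

lemma gram_det:
  "herm u u * herm v v * herm w w + herm u v * herm v w * herm w u + herm u w * herm v u * herm w v
   - herm u u * herm v w * herm w v - herm v v * herm u w * herm w u - herm w w * herm u v * herm v u
   = - det3 u v w * cnj (det3 u v w)"
  by (simp add: herm_def det3_def) algebra

lemma gram_null:
  assumes "herm u u = 0" "herm v v = 0" "herm w w = 0"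
  shows "herm u v * herm v w * herm w u + cnj (herm u v * herm v w * herm w u) = - det3 u v w * cnj (det3 u v w)"
proof -
  have "cnj (herm u v * herm v w * herm w u) = herm u w * herm v u * herm w v"
    by (simp add: herm_def) algebra
  thus ?thesis using gram_det[of u v w] assms by simp
qed

lemma cramer:
  "det3 v1 v2 v3 *s x = det3 x v2 v3 *s v1 + det3 v1 x v3 *s v2 + det3 v1 v2 x *s v3"
  by (simp add: vec_eq_iff forall_3 det3_def) algebra

lemma cramer_div:
  assumes "det3 v1 v2 v3 \<noteq> 0"
  shows "x = (det3 x v2 v3 / det3 v1 v2 v3) *s v1 + (det3 v1 x v3 / det3 v1 v2 v3) *s v2 + (det3 v1 v2 x / det3 v1 v2 v3) *s v3"
proof -
  have "det3 v1 v2 v3 *s x = det3 v1 v2 v3 *s ((det3 x v2 v3 / det3 v1 v2 v3) *s v1 + (det3 v1 x v3 / det3 v1 v2 v3) *s v2 + (det3 v1 v2 x / det3 v1 v2 v3) *s v3)"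
    using assms by (simp add: cramer[of v1 v2 v3 x] vec_eq_iff algebra_simps)
  hence "(1/det3 v1 v2 v3) *s (det3 v1 v2 v3 *s x) = (1/det3 v1 v2 v3) *s (det3 v1 v2 v3 *s ((det3 x v2 v3 / det3 v1 v2 v3) *s v1 + (det3 v1 x v3 / det3 v1 v2 v3) *s v2 + (det3 v1 v2 x / det3 v1 v2 v3) *s v3))"
    by simp
  thus ?thesis using assms by (simp add: vector_smult_assoc)
qed

lemma mcnj: "z * cnj z = complex_of_real ((cmod z)\<^sup>2)"
  by (metis complex_norm_square of_real_power)

lemma herm_self_sum: "herm x (vector [x$3, x$2, x$1]) = complex_of_real ((cmod (x$1))\<^sup>2 + (cmod (x$2))\<^sup>2 + (cmod (x$3))\<^sup>2)"
  by (simp add: herm_def mcnj)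

lemma det3_rep: "det3 x x z = 0" "det3 x z x = 0" "det3 z x x = 0"
  by (simp_all add: det3_def algebra_simps)

lemma nondeg:
  assumes "det3 b1 b2 b3 \<noteq> 0" "herm x b1 = 0" "herm x b2 = 0" "herm x b3 = 0"
  shows "x = 0"
proof -
  define y where "y = (vector [x$3, x$2, x$1] :: complex^3)"
  have "herm x y = 0"
    using cramer_div[OF assms(1), of y] assms(2-4)
    by (metis add.right_neutral herm_right3 mult_zero_right)
  hence "(cmod (x$1))\<^sup>2 + (cmod (x$2))\<^sup>2 + (cmod (x$3))\<^sup>2 = 0"
    unfolding y_def herm_self_sum by (simp only: of_real_eq_0_iff)
  hence "x$1 = 0" "x$2 = 0" "x$3 = 0"
    by (smt (verit) zero_less_power norm_le_zero_iff zero_le_power2)+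
  thus ?thesis by (simp add: vec_eq_iff forall_3)
qed

definition gmat :: "complex^3 \<Rightarrow> complex^3 \<Rightarrow> complex^3 \<Rightarrow> complex^3 \<Rightarrow> complex^3 \<Rightarrow> complex^3 \<Rightarrow> complex^3^3" where
  "gmat v1 v2 v3 w1 w2 w3 = (\<chi> i j. (det3 (axis j 1) v2 v3 * w1$i + det3 v1 (axis j 1) v3 * w2$i
       + det3 v1 v2 (axis j 1) * w3$i) / det3 v1 v2 v3)"

lemma gmat_apply:
  "gmat v1 v2 v3 w1 w2 w3 *v x = (det3 x v2 v3 / det3 v1 v2 v3) *s w1 + (det3 v1 x v3 / det3 v1 v2 v3) *s w2 + (det3 v1 v2 x / det3 v1 v2 v3) *s w3"
  by (simp add: vec_eq_iff forall_3 gmat_def matrix_vector_mult_def sum_3 axis_def det3_def add_divide_distrib diff_divide_distrib) algebra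

lemma herm_3x3:
  "herm (a1 *s x1 + a2 *s x2 + a3 *s x3) (b1 *s y1 + b2 *s y2 + b3 *s y3) =
    a1 * cnj b1 * herm x1 y1 + a1 * cnj b2 * herm x1 y2 + a1 * cnj b3 * herm x1 y3 +
    a2 * cnj b1 * herm x2 y1 + a2 * cnj b2 * herm x2 y2 + a2 * cnj b3 * herm x2 y3 +
    a3 * cnj b1 * herm x3 y1 + a3 * cnj b2 * herm x3 y2 + a3 * cnj b3 * herm x3 y3"
  by (simp add: herm_def algebra_simps)

lemma gram_lemma:
  assumes d: "det3 v1 v2 v3 \<noteq> 0"
    and g11: "herm w1 w1 = herm v1 v1" and g22: "herm w2 w2 = herm v2 v2" and g33: "herm w3 w3 = herm v3 v3"
    and g12: "herm w1 w2 = herm v1 v2" and g13: "herm w1 w3 = herm v1 v3" and g23: "herm w2 w3 = herm v2 v3"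
  shows "\<exists>A\<in>U21. A *v v1 = w1 \<and> A *v v2 = w2 \<and> A *v v3 = w3"
proof -
  let ?A = "gmat v1 v2 v3 w1 w2 w3"
  have g21: "herm w2 w1 = herm v2 v1" using g12 herm_conj by metis
  have g31: "herm w3 w1 = herm v3 v1" using g13 herm_conj by metis
  have g32: "herm w3 w2 = herm v3 v2" using g23 herm_conj by metis
  have "herm (?A *v x) (?A *v y) = herm x y" for x y
  proof -
    have "herm (?A *v x) (?A *v y) = herm ((det3 x v2 v3 / det3 v1 v2 v3) *s v1 + (det3 v1 x v3 / det3 v1 v2 v3) *s v2 + (det3 v1 v2 x / det3 v1 v2 v3) *s v3)
       ((det3 y v2 v3 / det3 v1 v2 v3) *s v1 + (det3 v1 y v3 / det3 v1 v2 v3) *s v2 + (det3 v1 v2 y / det3 v1 v2 v3) *s v3)"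
      unfolding gmat_apply herm_3x3 g11 g22 g33 g12 g13 g23 g21 g31 g32 ..
    also have "\<dots> = herm x y" using cramer_div[OF d, of x, symmetric] cramer_div[OF d, of y, symmetric] by simp
    finally show ?thesis .
  qed
  hence "?A \<in> U21" by (simp add: U21_def)
  moreover have "?A *v v1 = w1" "?A *v v2 = w2" "?A *v v3 = w3"
    using d by (simp_all add: gmat_apply det3_rep)
  ultimately show ?thesis by blast
qed



lemma s2: "complex_of_real (sqrt 2) * complex_of_real (sqrt 2) = 2"
proof -
  have "complex_of_real (sqrt 2) * complex_of_real (sqrt 2) = complex_of_real (sqrt 2 * sqrt 2)"
    by (simp only: of_real_mult)
  also have "\<dots> = 2" by simp
  finally show ?thesis .
qed

lemma lift_None: "lift None = vector [1, 0, 0]" by (simp add: lift_def)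
lemma lift_Some: "lift (Some (z, t)) = vector [- complex_of_real ((cmod z)\<^sup>2) + \<i> * complex_of_real t,
                            complex_of_real (sqrt 2) * z, 1]" by (simp add: lift_def)

lemma cmm: "cmod z * cmod z = Re z * Re z + Im z * Im z" by (metis cmod_power2 power2_eq_square)

lemma sq2mul: "complex_of_real (sqrt 2) * z * cnj (complex_of_real (sqrt 2) * z') = 2 * (z * cnj z')"
proof -
  have "complex_of_real (sqrt 2) * z * cnj (complex_of_real (sqrt 2) * z') = (complex_of_real (sqrt 2) * complex_of_real (sqrt 2)) * (z * cnj z')"
    by (simp only: complex_cnj_mult complex_cnj_complex_of_real mult_ac)
  thus ?thesis by (simp only: s2)
qed

lemma herm_SS: "herm (lift (Some(z,t))) (lift (Some(z',t'))) = - complex_of_real ((cmod z)\<^sup>2) - complex_of_real ((cmod z')\<^sup>2) + 2 * (z * cnj z') + \<i> * (t - t')"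
proof -
  have "herm (lift (Some(z,t))) (lift (Some(z',t'))) = (- complex_of_real ((cmod z)\<^sup>2) + \<i> * complex_of_real t) * 1
     + complex_of_real (sqrt 2) * z * cnj (complex_of_real (sqrt 2) * z') + 1 * cnj (- complex_of_real ((cmod z')\<^sup>2) + \<i> * complex_of_real t')"
    unfolding herm_def lift_Some by simp
  also have "\<dots> = - complex_of_real ((cmod z)\<^sup>2) - complex_of_real ((cmod z')\<^sup>2) + 2 * (z * cnj z') + \<i> * (t - t')"
    unfolding sq2mul by (simp add: algebra_simps)
  finally show ?thesis .
qed

lemma Re_herm_SS: "Re (herm (lift (Some(z,t))) (lift (Some(z',t')))) = - ((Re z - Re z')\<^sup>2 + (Im z - Im z')\<^sup>2)"
  unfolding herm_SS by (simp add: cmod_power2 del: norm_of_real) (simp add: power2_eq_square algebra_simps)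

lemma Im_herm_SS: "Im (herm (lift (Some(z,t))) (lift (Some(z,t')))) = t - t'"
  unfolding herm_SS by (simp add: algebra_simps)

lemma lift_null: "herm (lift p) (lift p) = 0"
proof (cases p)
  case None thus ?thesis by (simp add: lift_None herm_def)
next
  case (Some a)
  then obtain z t where p: "p = Some (z, t)" by (cases a) auto
  have "herm (lift p) (lift p) = - complex_of_real ((cmod z)\<^sup>2) - complex_of_real ((cmod z)\<^sup>2) + 2 * (z * cnj z)"
    unfolding p herm_SS by simp
  thus ?thesis by (simp add: mcnj)
qed

lemma lift3: "lift p $ 3 = (if p = None then 0 else 1)"
proof (cases p)
  case None thus ?thesis by (simp add: lift_None)
next
  case (Some a) thus ?thesis by (cases a) (simp add: lift_Some)
qed

lemma lift_nz: "lift p \<noteq> 0"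
proof
  assume "lift p = 0"
  hence "lift p $ 3 = 0 \<and> lift p $ 1 = 0" by simp
  thus False by (cases p) (simp_all add: lift3 lift_None)
qed

lemma herm_None_left: "herm (lift None) x = cnj (x $ 3)" by (simp add: herm_def lift_None)
lemma herm_None_right: "herm x (lift None) = x $ 3" by (simp add: herm_def lift_None)

lemma lift1_Some: "lift (Some (z, t)) $ 1 = - complex_of_real ((cmod z)\<^sup>2) + \<i> * complex_of_real t"
  by (simp add: lift_Some)
lemma lift2_Some: "lift (Some (z, t)) $ 2 = complex_of_real (sqrt 2) * z"
  by (simp add: lift_Some)
lemma lift1_None: "lift None $ 1 = 1"
  by (simp add: lift_None)

lemma lift_inj:
  assumes "lift p = c *s lift q" shows "p = q"
proof -
  have e1: "lift p $ 1 = c * lift q $ 1" and e2: "lift p $ 2 = c * lift q $ 2" and e3: "lift p $ 3 = c * lift q $ 3"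
    using assms by simp_all
  show ?thesis
  proof (cases p)
    case None
    show ?thesis
    proof (cases q)
      case (Some b)
      hence "c = 0" using e3 None by (simp add: lift3)
      thus ?thesis using e1 None by (simp add: lift1_None)
    qed (simp add: None)
  next
    case (Some a)
    then obtain z t where p: "p = Some (z, t)" by (cases a) auto
    show ?thesis
    proof (cases q)
      case None
      then show ?thesis using e3 p by (simp add: lift3)
    next
      case (Some b)
      then obtain z' t' where q: "q = Some (z', t')" by (cases b) auto
      have c1: "c = 1" using e3 p q by (simp add: lift3)
      have "complex_of_real (sqrt 2) * z = complex_of_real (sqrt 2) * z'"
        using e2 unfolding p q lift2_Some c1 by simp
      hence zz: "z = z'" by simp
      have "Im (lift p $ 1) = Im (lift q $ 1)" using e1 c1 by simp
      hence "t = t'" unfolding p q lift1_Some by simp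
      thus ?thesis using zz p q by simp
    qed
  qed
qed

lemma herm_lift_nz:
  assumes "p \<noteq> q" shows "herm (lift p) (lift q) \<noteq> 0"
proof (cases p)
  case None
  then obtain b where q: "q = Some b" using assms by (cases q) auto
  have "herm (lift p) (lift q) = 1" unfolding None herm_None_left lift3 q by simp
  thus ?thesis by simp
next
  case (Some a)
  then obtain z t where p: "p = Some (z, t)" by (cases a) auto
  show ?thesis
  proof (cases q)
    case None
    have "herm (lift p) (lift q) = 1" unfolding None herm_None_right lift3 p by simp
    thus ?thesis by simp
  next
    case (Some b)
    then obtain z' t' where q: "q = Some (z', t')" by (cases b) auto
    show ?thesis
    proof
      assume h: "herm (lift p) (lift q) = 0"
      have rr: "Re (herm (lift p) (lift q)) = - ((Re z - Re z')\<^sup>2 + (Im z - Im z')\<^sup>2)"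
        unfolding p q by (rule Re_herm_SS)
      have r0: "Re (herm (lift p) (lift q)) = 0" using h by simp
      have "(Re z - Re z')\<^sup>2 + (Im z - Im z')\<^sup>2 = 0" using rr r0 by linarith
      hence "Re z - Re z' = 0" "Im z - Im z' = 0" by (simp_all only: sum_power2_eq_zero_iff)
      hence zz: "z = z'" by (simp add: complex_eq_iff)
      have "Im (herm (lift p) (lift q)) = t - t'"
        unfolding p q zz by (rule Im_herm_SS)
      hence "t = t'" unfolding h by simp
      thus False using zz assms p q by simp
    qed
  qed
qed

lemma null_vec:
  assumes "v \<noteq> 0" "herm v v = 0"
  shows "\<exists>p c. c \<noteq> 0 \<and> v = c *s lift p"
proof (cases "v$3 = 0")
  case True
  have "herm v v = v$2 * cnj (v$2)" using True by (simp add: herm_def)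
  hence "v$2 = 0" using assms(2) by simp
  hence "v = v$1 *s lift None" using True by (simp add: lift_None vec_eq_iff forall_3)
  moreover have "v$1 \<noteq> 0" using assms(1) True \<open>v$2 = 0\<close> by (auto simp: vec_eq_iff forall_3)
  ultimately show ?thesis by blast
next
  case False
  define q where "q = v$1 / v$3"
  have v1: "v$1 = q * v$3" using False by (simp add: q_def)
  have "0 = herm v v" using assms by simp
  also have "\<dots> = q * (v$3 * cnj (v$3)) + v$2 * cnj (v$2) + cnj q * (v$3 * cnj (v$3))"
    by (simp add: herm_def v1 algebra_simps)
  also have "\<dots> = complex_of_real (2 * Re q * (cmod (v$3))\<^sup>2 + (cmod (v$2))\<^sup>2)"
    by (simp add: mcnj complex_eq_iff algebra_simps)
  finally have re0: "0 = complex_of_real (2 * Re q * (cmod (v$3))\<^sup>2 + (cmod (v$2))\<^sup>2)" .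
  have re: "2 * Re q * (cmod (v$3))\<^sup>2 + (cmod (v$2))\<^sup>2 = 0" using re0 by (metis of_real_eq_0_iff)
  have n3: "cmod (v$3) \<noteq> 0" using False by simp
  define p where "p = Some (v$2 / (complex_of_real (sqrt 2) * v$3), Im q)"
  have "(cmod (v$2 / (complex_of_real (sqrt 2) * v$3)))\<^sup>2 = (cmod (v$2))\<^sup>2 / (2 * (cmod (v$3))\<^sup>2)"
    by (simp add: norm_divide norm_mult power_divide power_mult_distrib)
  also have "\<dots> = - Re q" using re n3 by (simp add: field_simps)
  finally have m: "(cmod (v$2 / (complex_of_real (sqrt 2) * v$3)))\<^sup>2 = - Re q" .
  have qq: "- complex_of_real (- Re q) + \<i> * complex_of_real (Im q) = q" by (simp add: complex_eq_iff)
  have "v = v$3 *s lift p"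
    unfolding p_def lift_Some m qq using False
    by (simp add: vec_eq_iff forall_3 v1)
  thus ?thesis using False by blast
qed



lemma det3_span:
  "det3 (a1 *s u + b1 *s v) (a2 *s u + b2 *s v) (a3 *s u + b3 *s v) = 0"
  by (simp add: det3_def) algebra

lemma det3_lin3: "det3 a b (x - c *s y - d *s z) = det3 a b x - c * det3 a b y - d * det3 a b z"
  by (simp add: det3_def) algebra

lemma det3_cyc: "det3 u v w = det3 v w u"
  by (simp add: det3_def) algebra

lemma det3_smult: "det3 (a *s u) (b *s v) (c *s w) = a * b * c * det3 u v w"
  by (simp add: det3_def) algebra

lemma herm_2x2:
  "herm (a1 *s x1 + a2 *s x2) (b1 *s y1 + b2 *s y2) =
    a1 * cnj b1 * herm x1 y1 + a1 * cnj b2 * herm x1 y2 + a2 * cnj b1 * herm x2 y1 + a2 * cnj b2 * herm x2 y2"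
  by (simp add: herm_def algebra_simps)

lemma C1:
  assumes "on_common_C_circle p q r"
  shows "det3 (lift p) (lift q) (lift r) = 0"
proof -
  from assms obtain u v where uv: "\<forall>x\<in>{p, q, r}. \<exists>a b. lift x = a *s u + b *s v"
    unfolding on_common_C_circle_def by blast
  obtain a1 b1 where 1: "lift p = a1 *s u + b1 *s v" using uv by blast
  obtain a2 b2 where 2: "lift q = a2 *s u + b2 *s v" using uv by blast
  obtain a3 b3 where 3: "lift r = a3 *s u + b3 *s v" using uv by blast
  show ?thesis unfolding 1 2 3 by (rule det3_span)
qed

lemma herm_lift_zero_eq: "herm (lift s) (lift p) = 0 \<Longrightarrow> s = p"
  using herm_lift_nz by blast

lemma C2:
  assumes pq: "p \<noteq> q" and d: "det3 (lift p) (lift q) (lift r) = 0"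
  shows "on_common_C_circle p q r"
proof -
  define v1 where "v1 = lift p"
  define v2 where "v2 = lift q"
  define v3 where "v3 = lift r"
  have n1: "herm v1 v1 = 0" and n2: "herm v2 v2 = 0" and n3: "herm v3 v3 = 0"
    by (simp_all add: v1_def v2_def v3_def lift_null)
  have h12: "herm v1 v2 \<noteq> 0" using pq by (simp add: v1_def v2_def herm_lift_nz)
  have h21: "herm v2 v1 \<noteq> 0" using h12 herm_conj[of v2 v1] by simp
  define \<alpha> where "\<alpha> = herm v3 v2 / herm v1 v2"
  define \<beta> where "\<beta> = herm v3 v1 / herm v2 v1"
  define y where "y = v3 - \<alpha> *s v1 - \<beta> *s v2"
  have y1: "herm y v1 = 0"
    using h21 by (simp add: y_def herm_diff_left herm_smult_left n1 \<beta>_def)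
  have y2: "herm y v2 = 0"
    using h12 by (simp add: y_def herm_diff_left herm_smult_left n2 \<alpha>_def)
  have y1': "herm v1 y = 0" using y1 herm_conj[of v1 y] by simp
  have y2': "herm v2 y = 0" using y2 herm_conj[of v2 y] by simp
  have dy: "det3 v1 v2 y = 0" unfolding y_def det3_lin3 using d by (simp add: v1_def v2_def v3_def det3_rep)
  have "- herm y y * herm v1 v2 * herm v2 v1 = - det3 v1 v2 y * cnj (det3 v1 v2 y)"
    using gram_det[of v1 v2 y] by (simp add: n1 n2 y1 y2 y1' y2')
  hence "herm y y * herm v1 v2 * herm v2 v1 = 0" using dy by simp
  hence yy: "herm y y = 0" using h12 h21 by simp
  have y0: "y = 0"
  proof (rule ccontr)
    assume "y \<noteq> 0"
    then obtain s c where sc: "c \<noteq> 0" "y = c *s lift s" using null_vec yy by blast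
    have "herm (lift s) v1 = 0" using y1 sc by (simp add: herm_smult_left)
    hence "s = p" by (simp add: v1_def herm_lift_zero_eq)
    have "herm (lift s) v2 = 0" using y2 sc by (simp add: herm_smult_left)
    hence "s = q" by (simp add: v2_def herm_lift_zero_eq)
    thus False using \<open>s = p\<close> pq by simp
  qed
  have v3e: "v3 = \<alpha> *s v1 + \<beta> *s v2"
  proof -
    have "v3$i - \<alpha> * v1$i - \<beta> * v2$i = 0" for i using y0 by (simp add: y_def vec_eq_iff)
    hence "v3$i = \<alpha> * v1$i + \<beta> * v2$i" for i by (simp add: algebra_simps)
    thus ?thesis by (simp add: vec_eq_iff)
  qed
  define c where "c = herm v1 v2"
  define u where "u = 1 *s v1 + c *s v2"
  define v where "v = 1 *s v1 + (-c) *s v2"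
  have cc: "herm v2 v1 = cnj c" using herm_conj[of v2 v1] by (simp add: c_def)
  have cnz: "c \<noteq> 0" using h12 by (simp add: c_def)
  have "herm u u = 2 * (c * cnj c)"
    unfolding u_def herm_2x2 n1 n2 cc by (simp add: c_def[symmetric] algebra_simps)
  hence huu: "herm u u = 2 * complex_of_real ((cmod c)\<^sup>2)" by (simp only: mcnj)
  have "herm v v = - 2 * (c * cnj c)"
    unfolding v_def herm_2x2 n1 n2 cc by (simp add: c_def[symmetric] algebra_simps)
  hence hvv: "herm v v = - 2 * complex_of_real ((cmod c)\<^sup>2)" by (simp only: mcnj)
  have huv: "herm u v = 0"
    unfolding u_def v_def herm_2x2 n1 n2 cc by (simp add: c_def[symmetric] algebra_simps)
  have m1: "v1 = (1/2) *s u + (1/2) *s v" unfolding u_def v_def by (simp add: vec_eq_iff algebra_simps)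
  have m2: "v2 = (1/(2*c)) *s u + (-1/(2*c)) *s v" unfolding u_def v_def using cnz
    by (simp add: vec_eq_iff field_simps)
  have m3: "v3 = (\<alpha>/2 + \<beta>/(2*c)) *s u + (\<alpha>/2 - \<beta>/(2*c)) *s v" unfolding v3e u_def v_def using cnz
    by (simp add: vec_eq_iff field_simps)
  have mem: "\<forall>x\<in>{p,q,r}. \<exists>a b. lift x = a *s u + b *s v"
  proof -
    have "\<exists>a b. lift p = a *s u + b *s v" using m1 unfolding v1_def by blast
    moreover have "\<exists>a b. lift q = a *s u + b *s v" using m2 unfolding v2_def by blast
    moreover have "\<exists>a b. lift r = a *s u + b *s v" using m3 unfolding v3_def by blast
    ultimately show ?thesis by blast
  qed
  have ru: "Re (herm u u) > 0" using cnz unfolding huu by simp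
  have rv: "Re (herm v v) < 0" using cnz unfolding hvv by simp
  show ?thesis unfolding on_common_C_circle_def using mem ru rv huv by blast
qed

lemma notC_det:
  assumes "p \<noteq> q" "\<not> on_common_C_circle p q r"
  shows "det3 (lift p) (lift q) (lift r) \<noteq> 0"
  using C2 assms by blast



lemma alg_G1:
  fixes h12 h21 h13 h31 h23 h32 h41 h42 h43 d cd d2 a2 a3 :: complex
  assumes nz: "d \<noteq> 0" "h41 \<noteq> 0" "h32 \<noteq> 0" "h23 \<noteq> 0"
    and F1: "h12*h23*h31 + h21*h32*h13 = - d*cd"
    and E41: "d*h41 = a2*h21 + a3*h31" and E42: "d*h42 = d2*h12 + a3*h32" and E43: "d*h43 = d2*h13 + a2*h23"
  shows "h42*h31/(h41*h32) + h43*h21/(h41*h23) - 1 = - d2*cd/(h41*h32*h23)"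
proof -
  have "d * (h42*h31*h23 + h43*h21*h32 - h41*h32*h23) = (d*h42)*h31*h23 + (d*h43)*h21*h32 - (d*h41)*h32*h23"
    by (simp add: algebra_simps)
  also have "\<dots> = d2 * (h12*h23*h31 + h21*h32*h13)" unfolding E41 E42 E43 by (simp add: algebra_simps)
  also have "\<dots> = d * (- d2 * cd)" unfolding F1 by (simp add: algebra_simps)
  finally have "h42*h31*h23 + h43*h21*h32 - h41*h32*h23 = - d2 * cd" by (simp only: mult_left_cancel[OF nz(1)])
  moreover have "h42*h31/(h41*h32) + h43*h21/(h41*h23) - 1 = (h42*h31*h23 + h43*h21*h32 - h41*h32*h23)/(h41*h32*h23)"
    using nz by (simp add: field_simps)
  ultimately show ?thesis by simp
qed

lemma alg_W:
  fixes h12 h21 h13 h31 h23 h32 h41 h14 h42 h24 h43 h34 d cd d2 cd2 :: complex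
  assumes nz: "h41 \<noteq> 0" "h14 \<noteq> 0" "h32 \<noteq> 0" "h23 \<noteq> 0" "h12 \<noteq> 0" "h31 \<noteq> 0" "h21 \<noteq> 0" "h13 \<noteq> 0"
    and F1: "h12*h23*h31 + h21*h32*h13 = - d*cd"
    and F3: "h23*h34*h42 + h32*h43*h24 = - d2*cd2"
  shows "(h42*h31/(h41*h32)) * (h34*h12/(h14*h32)) * (1 + (-(h21*h32*h13))/(-(h12*h23*h31)))
       + (h24*h13/(h14*h23)) * (h43*h21/(h41*h23)) * (1 + (-(h12*h23*h31))/(-(h21*h32*h13)))
       = (- d2*cd/(h41*h32*h23)) * (- cd2*d/(h14*h23*h32))"
proof -
  have s1: "(-(h12*h23*h31)) + (-(h21*h32*h13)) = d*cd"
  proof -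
    have "(-(h12*h23*h31)) + (-(h21*h32*h13)) = - (h12*h23*h31 + h21*h32*h13)" by simp
    thus ?thesis unfolding F1 by simp
  qed
  have a0: "1 + (-(h21*h32*h13))/(-(h12*h23*h31)) = ((-(h12*h23*h31)) + (-(h21*h32*h13)))/(-(h12*h23*h31))"
    using nz by (simp add: field_simps)
  have b0: "1 + (-(h12*h23*h31))/(-(h21*h32*h13)) = ((-(h12*h23*h31)) + (-(h21*h32*h13)))/(-(h21*h32*h13))"
    using nz by (simp add: field_simps)
  have a: "1 + (-(h21*h32*h13))/(-(h12*h23*h31)) = (d*cd) / (-(h12*h23*h31))"
    using a0 s1 by simp
  have b: "1 + (-(h12*h23*h31))/(-(h21*h32*h13)) = (d*cd) / (-(h21*h32*h13))"
    using b0 s1 by simp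
  show ?thesis unfolding a b using nz
    apply (simp add: field_simps)
    using F3 by algebra
qed

lemma alg_Y:
  fixes h12 h21 h13 h31 h23 h32 h41 h14 h42 h34 :: complex and cw :: real
  assumes nz: "h41 \<noteq> 0" "h14 \<noteq> 0" "h32 \<noteq> 0" "h23 \<noteq> 0" "h12 \<noteq> 0" "h31 \<noteq> 0"
  shows "(h42*h31/(h41*h32)) * (h34*h12/(h14*h32)) * (complex_of_real cw / (-(h12*h23*h31)))
      = - complex_of_real cw * (h23*h34*h42) / ((h41*h14)*(h32*h23)*(h32*h23))"
  using nz by (simp add: field_simps)

lemma alg_q:
  fixes h12 h21 h13 h31 h23 h32 h41 h42 h43 :: complex
  assumes nz: "h41 \<noteq> 0" "h43 \<noteq> 0" "h32 \<noteq> 0" "h23 \<noteq> 0" "h12 \<noteq> 0" "h31 \<noteq> 0" "h21 \<noteq> 0" "h13 \<noteq> 0"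
  shows "(h42*h31/(h41*h32)) / (h43*h21/(h41*h23)) * ((-(h21*h32*h13)) / (-(h12*h23*h31))) = h42*h13/(h43*h12)"
  using nz by (simp add: field_simps)

lemma complex_add_cnj': "z + cnj z = complex_of_real (2 * Re z)"
  by (simp add: complex_add_cnj)

lemma exp_facts:
  assumes "w \<noteq> 0"
  shows "exp (- \<i> * complex_of_real (Arg w)) = complex_of_real (cmod w) / w"
    and "exp (- 2 * \<i> * complex_of_real (Arg w)) = cnj w / w"
    and "exp (2 * \<i> * complex_of_real (Arg w)) * (cnj w / w) = 1"
proof -
  have e: "w = complex_of_real (cmod w) * exp (\<i> * complex_of_real (Arg w))" using Arg_eq[OF assms] .
  have cw: "cmod w \<noteq> 0" using assms by simp
  have e1: "exp (\<i> * complex_of_real (Arg w)) = w / complex_of_real (cmod w)"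
    using e cw by (simp add: field_simps)
  have "exp (- \<i> * complex_of_real (Arg w)) = inverse (exp (\<i> * complex_of_real (Arg w)))"
    by (simp add: exp_minus[symmetric])
  thus 1: "exp (- \<i> * complex_of_real (Arg w)) = complex_of_real (cmod w) / w" unfolding e1 by simp
  have s: "- 2 * \<i> * complex_of_real (Arg w) = (- \<i> * complex_of_real (Arg w)) + (- \<i> * complex_of_real (Arg w))"
    by simp
  have "exp (- 2 * \<i> * complex_of_real (Arg w)) = exp (- \<i> * complex_of_real (Arg w)) * exp (- \<i> * complex_of_real (Arg w))"
    unfolding s by (rule exp_add)
  also have "\<dots> = (complex_of_real (cmod w) * complex_of_real (cmod w)) / (w * w)" unfolding 1 by simp
  also have "\<dots> = cnj w / w"
    using assms by (simp add: field_simps mcnj power2_eq_square of_real_mult[symmetric] del: of_real_mult)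
  finally show 2: "exp (- 2 * \<i> * complex_of_real (Arg w)) = cnj w / w" .
  have "exp (2 * \<i> * complex_of_real (Arg w)) * exp (- 2 * \<i> * complex_of_real (Arg w)) = exp (2 * \<i> * complex_of_real (Arg w) + (- 2 * \<i> * complex_of_real (Arg w)))"
    by (rule exp_add[symmetric])
  hence "exp (2 * \<i> * complex_of_real (Arg w)) * exp (- 2 * \<i> * complex_of_real (Arg w)) = 1"
    by simp
  thus "exp (2 * \<i> * complex_of_real (Arg w)) * (cnj w / w) = 1" unfolding 2 .
qed



lemma part1_vec:
  fixes v1 v2 v3 v4 :: "complex^3"
  assumes n1: "herm v1 v1 = 0" and n2: "herm v2 v2 = 0" and n3: "herm v3 v3 = 0" and n4: "herm v4 v4 = 0"
    and nz12: "herm v1 v2 \<noteq> 0" and nz13: "herm v1 v3 \<noteq> 0" and nz14: "herm v1 v4 \<noteq> 0"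
    and nz23: "herm v2 v3 \<noteq> 0" and nz24: "herm v2 v4 \<noteq> 0" and nz34: "herm v3 v4 \<noteq> 0"
    and d: "det3 v1 v2 v3 \<noteq> 0" and d2: "det3 v2 v3 v4 \<noteq> 0"
  defines "X1 \<equiv> herm v4 v2 * herm v3 v1 / (herm v4 v1 * herm v3 v2)"
    and "X2 \<equiv> herm v4 v3 * herm v2 v1 / (herm v4 v1 * herm v2 v3)"
    and "w \<equiv> - herm v1 v2 * herm v2 v3 * herm v3 v1"
  shows "Arg w \<in> {-pi/2<..<pi/2}"
    and "(cmod (X1 + X2 - 1))\<^sup>2 = 2 * Re (X1 * cnj X2 * (1 + exp (- 2 * \<i> * complex_of_real (Arg w))))"
    and "X1 + X2 - 1 \<noteq> 0"
    and "Re (X1 * cnj X2 * exp (- \<i> * complex_of_real (Arg w))) > 0"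
    and "X1 / X2 * (cnj w / w) = herm v4 v2 * herm v1 v3 / (herm v4 v3 * herm v1 v2)"
proof -
  define h12 where "h12 = herm v1 v2"
  define h21 where "h21 = herm v2 v1"
  define h13 where "h13 = herm v1 v3"
  define h31 where "h31 = herm v3 v1"
  define h14 where "h14 = herm v1 v4"
  define h41 where "h41 = herm v4 v1"
  define h23 where "h23 = herm v2 v3"
  define h32 where "h32 = herm v3 v2"
  define h24 where "h24 = herm v2 v4"
  define h42 where "h42 = herm v4 v2"
  define h34 where "h34 = herm v3 v4"
  define h43 where "h43 = herm v4 v3"
  have c21: "h21 = cnj h12" unfolding h21_def h12_def by (rule herm_conj)
  have c31: "h31 = cnj h13" unfolding h31_def h13_def by (rule herm_conj)
  have c41: "h41 = cnj h14" unfolding h41_def h14_def by (rule herm_conj)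
  have c32: "h32 = cnj h23" unfolding h32_def h23_def by (rule herm_conj)
  have c42: "h42 = cnj h24" unfolding h42_def h24_def by (rule herm_conj)
  have c43: "h43 = cnj h34" unfolding h43_def h34_def by (rule herm_conj)
  have z: "h12 \<noteq> 0" "h13 \<noteq> 0" "h14 \<noteq> 0" "h23 \<noteq> 0" "h24 \<noteq> 0" "h34 \<noteq> 0"
    using nz12 nz13 nz14 nz23 nz24 nz34 by (simp_all add: h12_def h13_def h14_def h23_def h24_def h34_def)
  hence z': "h21 \<noteq> 0" "h31 \<noteq> 0" "h41 \<noteq> 0" "h32 \<noteq> 0" "h42 \<noteq> 0" "h43 \<noteq> 0"
    by (simp_all add: c21 c31 c41 c32 c42 c43)
  define dd where "dd = det3 v1 v2 v3"
  define ee where "ee = det3 v2 v3 v4"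
  have F1a: "h12*h23*h31 + cnj (h12*h23*h31) = - dd * cnj dd"
    unfolding h12_def h23_def h31_def dd_def by (rule gram_null[OF n1 n2 n3])
  have F1: "h12*h23*h31 + h21*h32*h13 = - dd * cnj dd"
    using F1a by (simp add: c21 c32 c31)
  have F3a: "h23*h34*h42 + cnj (h23*h34*h42) = - ee * cnj ee"
    unfolding h23_def h34_def h42_def ee_def by (rule gram_null[OF n2 n3 n4])
  have F3: "h23*h34*h42 + h32*h43*h24 = - ee * cnj ee"
    using F3a by (simp add: c32 c43 c42)
  have cr: "dd *s v4 = ee *s v1 + det3 v1 v4 v3 *s v2 + det3 v1 v2 v4 *s v3"
    using cramer[of v1 v2 v3 v4] det3_cyc[of v4 v2 v3] by (simp add: dd_def ee_def)
  have E4: "dd * herm v4 x = ee * herm v1 x + det3 v1 v4 v3 * herm v2 x + det3 v1 v2 v4 * herm v3 x" for x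
    using arg_cong[OF cr, of "\<lambda>y. herm y x"] by (simp add: herm_smult_left herm_left3)
  have E41: "dd*h41 = det3 v1 v4 v3*h21 + det3 v1 v2 v4*h31"
    using E4[of v1] by (simp add: n1 h41_def h21_def h31_def)
  have E42: "dd*h42 = ee*h12 + det3 v1 v2 v4*h32"
    using E4[of v2] by (simp add: n2 h42_def h12_def h32_def)
  have E43: "dd*h43 = ee*h13 + det3 v1 v4 v3*h23"
    using E4[of v3] by (simp add: n3 h43_def h13_def h23_def)
  have X1e: "X1 = h42*h31/(h41*h32)" by (simp add: X1_def h42_def h31_def h41_def h32_def)
  have X2e: "X2 = h43*h21/(h41*h23)" by (simp add: X2_def h43_def h21_def h41_def h23_def)
  have we: "w = - (h12*h23*h31)" by (simp add: w_def h12_def h23_def h31_def)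
  have cX2: "cnj X2 = h34*h12/(h14*h32)" by (simp add: X2e c21 c41 c32 c43)
  have cX1: "cnj X1 = h24*h13/(h14*h23)" by (simp add: X1e c31 c41 c32 c42)
  have cw: "cnj w = - (h21*h32*h13)" by (simp add: we c21 c31 c32)
  have wnz: "w \<noteq> 0" using z z' we by simp
  have G1: "X1 + X2 - 1 = - ee*cnj dd/(h41*h32*h23)"
    unfolding X1e X2e by (rule alg_G1[OF _ _ _ _ F1 E41 E42 E43]) (use d z z' dd_def in auto)
  have cG1: "cnj (X1 + X2 - 1) = - cnj ee * dd/(h14*h23*h32)"
    unfolding G1 by (simp add: c41 c32)
  have "complex_of_real (2 * Re (h12*h23*h31)) = - complex_of_real ((cmod dd)\<^sup>2)"
    unfolding complex_add_cnj'[symmetric] mcnj[symmetric] using F1a by simp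
  hence reu: "2 * Re (h12*h23*h31) = - (cmod dd)\<^sup>2" by (metis of_real_minus of_real_eq_iff)
  have rw: "Re w = - Re (h12*h23*h31)" unfolding we by (simp only: uminus_complex.sel)
  have pd: "(cmod dd)\<^sup>2 > 0" using d by (simp add: dd_def)
  have "Re w > 0" using rw reu pd by linarith
  thus "Arg w \<in> {-pi/2<..<pi/2}" using Arg_Re_pos[of w] by auto
  note ef = exp_facts[OF wnz]
  have W: "X1 * cnj X2 * (1 + cnj w / w) + cnj (X1 * cnj X2 * (1 + cnj w / w)) = (X1 + X2 - 1) * cnj (X1 + X2 - 1)"
  proof -
    have e1: "cnj (X1 * cnj X2 * (1 + cnj w / w)) = cnj X1 * X2 * (1 + w / cnj w)" by simp
    have "X1 * cnj X2 * (1 + cnj w / w) + cnj X1 * X2 * (1 + w / cnj w) =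
       (h42*h31/(h41*h32)) * (h34*h12/(h14*h32)) * (1 + (-(h21*h32*h13))/(-(h12*h23*h31)))
       + (h24*h13/(h14*h23)) * (h43*h21/(h41*h23)) * (1 + (-(h12*h23*h31))/(-(h21*h32*h13)))"
      unfolding cX1 cX2 cw unfolding X1e X2e we by (simp only:)
    hence "X1 * cnj X2 * (1 + cnj w / w) + cnj (X1 * cnj X2 * (1 + cnj w / w)) =
       (h42*h31/(h41*h32)) * (h34*h12/(h14*h32)) * (1 + (-(h21*h32*h13))/(-(h12*h23*h31)))
       + (h24*h13/(h14*h23)) * (h43*h21/(h41*h23)) * (1 + (-(h12*h23*h31))/(-(h21*h32*h13)))"
      unfolding e1 .
    also have "\<dots> = (- ee*cnj dd/(h41*h32*h23)) * (- cnj ee*dd/(h14*h23*h32))"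
      by (rule alg_W[OF _ _ _ _ _ _ _ _ F1 F3]) (use z z' in auto)
    finally show ?thesis unfolding G1 cG1[unfolded G1] by simp
  qed
  have "complex_of_real ((cmod (X1 + X2 - 1))\<^sup>2) = complex_of_real (2 * Re (X1 * cnj X2 * (1 + cnj w / w)))"
    unfolding complex_add_cnj'[symmetric] mcnj[symmetric] W ..
  thus "(cmod (X1 + X2 - 1))\<^sup>2 = 2 * Re (X1 * cnj X2 * (1 + exp (- 2 * \<i> * complex_of_real (Arg w))))"
    unfolding ef(2) by (simp only: of_real_eq_iff)
  show "X1 + X2 - 1 \<noteq> 0" unfolding G1 using d d2 z z' by (simp add: dd_def ee_def)
  define R where "R = (cmod h41)\<^sup>2 * (cmod h23)\<^sup>2 * (cmod h23)\<^sup>2"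
  have R: "R > 0" using z z' by (simp add: R_def)
  have Rc: "(h41*h14)*(h32*h23)*(h32*h23) = complex_of_real R"
    by (simp add: R_def c41 c32 mcnj mult.commute)
  have "X1 * cnj X2 * exp (- \<i> * complex_of_real (Arg w)) = - complex_of_real (cmod w) * (h23*h34*h42) / complex_of_real R"
    unfolding ef(1) unfolding X1e cX2 we Rc[symmetric] by (rule alg_Y) (use z z' in auto)
  also have "\<dots> = complex_of_real (- cmod w / R) * (h23*h34*h42)" by simp
  finally have Y: "X1 * cnj X2 * exp (- \<i> * complex_of_real (Arg w)) = complex_of_real (- cmod w / R) * (h23*h34*h42)" .
  have "complex_of_real (2 * Re (h23*h34*h42)) = - complex_of_real ((cmod ee)\<^sup>2)"
    unfolding complex_add_cnj'[symmetric] mcnj[symmetric] using F3a by simp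
  hence ret: "2 * Re (h23*h34*h42) = - (cmod ee)\<^sup>2" by (metis of_real_minus of_real_eq_iff)
  have "Re (X1 * cnj X2 * exp (- \<i> * complex_of_real (Arg w))) = (- cmod w / R) * Re (h23*h34*h42)"
    unfolding Y by simp
  also have "\<dots> = cmod w * (cmod ee)\<^sup>2 / (2 * R)"
  proof -
    have t: "Re (h23*h34*h42) = - (cmod ee)\<^sup>2 / 2" using ret by linarith
    show ?thesis unfolding t using R by (simp add: field_simps)
  qed
  also have "\<dots> > 0" using R wnz d2 by (simp add: ee_def)
  finally show "Re (X1 * cnj X2 * exp (- \<i> * complex_of_real (Arg w))) > 0" .
  show "X1 / X2 * (cnj w / w) = herm v4 v2 * herm v1 v3 / (herm v4 v3 * herm v1 v2)"
    unfolding cw unfolding X1e X2e we h42_def[symmetric] h13_def[symmetric] h43_def[symmetric] h12_def[symmetric]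
    by (rule alg_q) (use z z' in auto)
qed



lemma U21_herm: "A \<in> U21 \<Longrightarrow> herm (A *v x) (A *v y) = herm x y"
  by (simp add: U21_def)

lemma herm_map:
  assumes "A \<in> U21" "A *v x = c *s y" "A *v x' = c' *s y'" "c \<noteq> 0" "c' \<noteq> 0"
  shows "herm y y' = herm x x' / (c * cnj c')"
proof -
  have "herm x x' = herm (c *s y) (c' *s y')" using U21_herm[OF assms(1), of x x'] assms(2,3) by simp
  also have "\<dots> = c * cnj c' * herm y y'" by (simp add: herm_smult_left herm_smult_right)
  finally show ?thesis using assms(4,5) by (simp add: field_simps)
qed

lemma maps_toE: "maps_to A p q \<Longrightarrow> (\<And>c. c \<noteq> 0 \<Longrightarrow> A *v lift p = c *s lift q \<Longrightarrow> thesis) \<Longrightarrow> thesis"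
  unfolding maps_to_def by blast

lemma B0_inv:
  assumes A: "A \<in> U21" and m1: "maps_to A p1 q1" and m2: "maps_to A p2 q2"
    and m3: "maps_to A p3 q3" and m4: "maps_to A p4 q4"
  shows "B0 (p1, p2, p3, p4) = B0 (q1, q2, q3, q4)"
proof -
  obtain c1 where c1: "c1 \<noteq> 0" "A *v lift p1 = c1 *s lift q1" using m1 by (rule maps_toE)
  obtain c2 where c2: "c2 \<noteq> 0" "A *v lift p2 = c2 *s lift q2" using m2 by (rule maps_toE)
  obtain c3 where c3: "c3 \<noteq> 0" "A *v lift p3 = c3 *s lift q3" using m3 by (rule maps_toE)
  obtain c4 where c4: "c4 \<noteq> 0" "A *v lift p4 = c4 *s lift q4" using m4 by (rule maps_toE)
  have h: "\<And>x y cx cy px py. cx \<noteq> 0 \<Longrightarrow> cy \<noteq> 0 \<Longrightarrow> A *v lift px = cx *s lift x \<Longrightarrow> A *v lift py = cy *s lift y \<Longrightarrow>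
     herm (lift x) (lift y) = herm (lift px) (lift py) / (cx * cnj cy)"
    using herm_map[OF A] by blast
  note hh = h[OF c1(1) c2(1) c1(2) c2(2)] h[OF c2(1) c1(1) c2(2) c1(2)]
    h[OF c1(1) c3(1) c1(2) c3(2)] h[OF c3(1) c1(1) c3(2) c1(2)]
    h[OF c2(1) c3(1) c2(2) c3(2)] h[OF c3(1) c2(1) c3(2) c2(2)]
    h[OF c4(1) c1(1) c4(2) c1(2)] h[OF c4(1) c2(1) c4(2) c2(2)] h[OF c4(1) c3(1) c4(2) c3(2)]
  have cr1: "crossratio q1 q2 q3 q4 = crossratio p1 p2 p3 p4"
    unfolding crossratio_def hh using c1 c2 c3 c4 by (simp add: field_simps)
  have cr2: "crossratio q1 q3 q2 q4 = crossratio p1 p3 p2 p4"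
    unfolding crossratio_def hh using c1 c2 c3 c4 by (simp add: field_simps)
  define R where "R = (cmod c1)\<^sup>2 * (cmod c2)\<^sup>2 * (cmod c3)\<^sup>2"
  have Rp: "R > 0" using c1 c2 c3 by (simp add: R_def)
  have "- herm (lift q1) (lift q2) * herm (lift q2) (lift q3) * herm (lift q3) (lift q1)
     = (- herm (lift p1) (lift p2) * herm (lift p2) (lift p3) * herm (lift p3) (lift p1)) / ((c1 * cnj c1) * (c2 * cnj c2) * (c3 * cnj c3))"
    unfolding hh using c1 c2 c3 by (simp add: field_simps)
  also have "(c1 * cnj c1) * (c2 * cnj c2) * (c3 * cnj c3) = complex_of_real R"
    unfolding R_def mcnj by simp
  finally have eq: "- herm (lift q1) (lift q2) * herm (lift q2) (lift q3) * herm (lift q3) (lift q1)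
     = (- herm (lift p1) (lift p2) * herm (lift p2) (lift p3) * herm (lift p3) (lift p1)) / complex_of_real R" .
  have "cartan q1 q2 q3 = cartan p1 p2 p3"
    unfolding cartan_def eq by (rule Arg_divide_of_real[OF Rp])
  thus ?thesis using cr1 cr2 by (simp add: B0_def)
qed

lemma orbit_from:
  fixes r :: real
  assumes d: "det3 (lift p1) (lift p2) (lift p3) \<noteq> 0"
    and nz: "herm (lift p4) (lift p2) \<noteq> 0" "herm (lift p1) (lift p2) \<noteq> 0"
    and r: "r > 0"
    and q: "herm (lift p4) (lift p2) * herm (lift p1) (lift p3) = complex_of_real r * (herm (lift p4) (lift p3) * herm (lift p1) (lift p2))"
  shows "in_stab_orbit p2 p3 p1 p4"
proof -
  define s where "s = sqrt r"
  have s: "s > 0" "s * s = r" using r by (simp_all add: s_def)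
  define v1 where "v1 = lift p1"
  define v2 where "v2 = lift p2"
  define v3 where "v3 = lift p3"
  define v4 where "v4 = lift p4"
  define c1 where "c1 = complex_of_real s * herm v1 v2 / herm v4 v2"
  have c1nz: "c1 \<noteq> 0" using s nz by (simp add: c1_def v1_def v2_def v4_def)
  have sc: "complex_of_real s \<noteq> 0" using s by simp
  have g11: "herm (c1 *s v4) (c1 *s v4) = herm v1 v1"
    by (simp add: herm_smult_left herm_smult_right v1_def v4_def lift_null)
  have g22: "herm ((1 / complex_of_real s) *s v2) ((1 / complex_of_real s) *s v2) = herm v2 v2"
    by (simp add: herm_smult_left herm_smult_right v2_def lift_null)
  have g33: "herm (complex_of_real s *s v3) (complex_of_real s *s v3) = herm v3 v3"
    by (simp add: herm_smult_left herm_smult_right v3_def lift_null)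
  have g12: "herm (c1 *s v4) ((1 / complex_of_real s) *s v2) = herm v1 v2"
    using nz sc by (simp add: herm_smult_left herm_smult_right c1_def v1_def v2_def v4_def field_simps)
  have g13: "herm (c1 *s v4) (complex_of_real s *s v3) = herm v1 v3"
  proof -
    have "herm (c1 *s v4) (complex_of_real s *s v3) = complex_of_real (s * s) * herm v1 v2 * herm v4 v3 / herm v4 v2"
      by (simp add: herm_smult_left herm_smult_right c1_def field_simps)
    also have "\<dots> = herm v1 v3"
      using q nz unfolding s(2) by (simp add: v1_def v2_def v3_def v4_def field_simps)
    finally show ?thesis .
  qed
  have g23: "herm ((1 / complex_of_real s) *s v2) (complex_of_real s *s v3) = herm v2 v3"
    using sc by (simp add: herm_smult_left herm_smult_right)
  obtain A where A: "A \<in> U21" "A *v v1 = c1 *s v4" "A *v v2 = (1 / complex_of_real s) *s v2" "A *v v3 = complex_of_real s *s v3"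
    using gram_lemma[OF d[folded v1_def v2_def v3_def] g11 g22 g33 g12 g13 g23] by blast
  have m2: "maps_to A p2 p2" unfolding maps_to_def
  proof (intro exI conjI)
    show "1 / complex_of_real s \<noteq> 0" using sc by simp
    show "A *v lift p2 = (1 / complex_of_real s) *s lift p2" using A(3) by (simp add: v2_def)
  qed
  have m3: "maps_to A p3 p3" unfolding maps_to_def
  proof (intro exI conjI)
    show "complex_of_real s \<noteq> 0" using sc by simp
    show "A *v lift p3 = complex_of_real s *s lift p3" using A(4) by (simp add: v3_def)
  qed
  have m1: "maps_to A p1 p4" unfolding maps_to_def
  proof (intro exI conjI)
    show "c1 \<noteq> 0" using c1nz by simp
    show "A *v lift p1 = c1 *s lift p4" using A(2) by (simp add: v1_def v4_def)
  qed
  show ?thesis unfolding in_stab_orbit_def using A(1) m1 m2 m3 by blast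
qed

lemma orbit_to:
  assumes o: "in_stab_orbit p2 p3 p1 p4"
    and nz: "herm (lift p2) (lift p3) \<noteq> 0"
  shows "\<exists>r>0. herm (lift p4) (lift p2) * herm (lift p1) (lift p3) = complex_of_real r * (herm (lift p4) (lift p3) * herm (lift p1) (lift p2))"
proof -
  obtain A where A: "A \<in> U21" "maps_to A p2 p2" "maps_to A p3 p3" "maps_to A p1 p4"
    using o unfolding in_stab_orbit_def by blast
  obtain c2 where c2: "c2 \<noteq> 0" "A *v lift p2 = c2 *s lift p2" using A(2) by (rule maps_toE)
  obtain c3 where c3: "c3 \<noteq> 0" "A *v lift p3 = c3 *s lift p3" using A(3) by (rule maps_toE)
  obtain c1 where c1: "c1 \<noteq> 0" "A *v lift p1 = c1 *s lift p4" using A(4) by (rule maps_toE)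
  have e23: "herm (lift p2) (lift p3) = herm (lift p2) (lift p3) / (c2 * cnj c3)"
    by (rule herm_map[OF A(1) c2(2) c3(2) c2(1) c3(1)])
  have e42: "herm (lift p4) (lift p2) = herm (lift p1) (lift p2) / (c1 * cnj c2)"
    by (rule herm_map[OF A(1) c1(2) c2(2) c1(1) c2(1)])
  have e43: "herm (lift p4) (lift p3) = herm (lift p1) (lift p3) / (c1 * cnj c3)"
    by (rule herm_map[OF A(1) c1(2) c3(2) c1(1) c3(1)])
  have cc: "c2 * cnj c3 = 1" using e23 nz c2 c3 by (simp add: field_simps)
  hence cc': "c3 * cnj c2 = 1" by (metis complex_cnj_cnj complex_cnj_mult complex_cnj_one mult.commute)
  have "herm (lift p4) (lift p2) * herm (lift p1) (lift p3) = complex_of_real ((cmod c3)\<^sup>2) * (herm (lift p4) (lift p3) * herm (lift p1) (lift p2))"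
  proof -
    have cnj2: "cnj c2 = 1 / c3" using cc' c3 by (simp add: field_simps)
    show ?thesis unfolding e42 e43 mcnj[symmetric] cnj2 using c1 c3 by (simp add: field_simps)
  qed
  moreover have "(cmod c3)\<^sup>2 > 0" using c3 by simp
  ultimately show ?thesis by blast
qed



lemma C4ppD:
  assumes "(p1, p2, p3, p4) \<in> C4pp"
  shows "p1 \<noteq> p2" "p1 \<noteq> p3" "p1 \<noteq> p4" "p2 \<noteq> p3" "p2 \<noteq> p4" "p3 \<noteq> p4"
    "\<not> on_common_C_circle p1 p2 p3" "\<not> on_common_C_circle p2 p3 p4" "\<not> in_stab_orbit p2 p3 p1 p4"
  using assms by (auto simp: C4pp_def)

lemma part1:
  assumes P: "(p1, p2, p3, p4) \<in> C4pp"
  shows "let X1 = crossratio p1 p2 p3 p4; X2 = crossratio p1 p3 p2 p4; A = cartan p1 p2 p3 in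
              A \<in> {-pi/2<..<pi/2} \<and>
              (cmod (X1 + X2 - 1))\<^sup>2 = 2 * Re (X1 * cnj X2 * (1 + exp (- 2 * \<i> * complex_of_real A))) \<and>
              X1 + X2 - 1 \<noteq> 0 \<and>
              Re (X1 * cnj X2 * exp (- \<i> * complex_of_real A)) > 0 \<and>
              Arg (X1 / X2) \<noteq> 2 * A"
proof -
  note D = C4ppD[OF P]
  have d: "det3 (lift p1) (lift p2) (lift p3) \<noteq> 0" using notC_det D by blast
  have d2: "det3 (lift p2) (lift p3) (lift p4) \<noteq> 0" using notC_det D by blast
  have nz: "herm (lift p1) (lift p2) \<noteq> 0" "herm (lift p1) (lift p3) \<noteq> 0" "herm (lift p1) (lift p4) \<noteq> 0"
    "herm (lift p2) (lift p3) \<noteq> 0" "herm (lift p2) (lift p4) \<noteq> 0" "herm (lift p3) (lift p4) \<noteq> 0"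
    using D herm_lift_nz by auto
  have nz': "herm (lift p2) (lift p1) \<noteq> 0" "herm (lift p3) (lift p1) \<noteq> 0" "herm (lift p4) (lift p1) \<noteq> 0"
    "herm (lift p3) (lift p2) \<noteq> 0" "herm (lift p4) (lift p2) \<noteq> 0" "herm (lift p4) (lift p3) \<noteq> 0"
    using D herm_lift_nz by auto
  note R = part1_vec[OF lift_null lift_null lift_null lift_null nz d d2]
  define X1 where "X1 = crossratio p1 p2 p3 p4"
  define X2 where "X2 = crossratio p1 p3 p2 p4"
  define w where "w = - herm (lift p1) (lift p2) * herm (lift p2) (lift p3) * herm (lift p3) (lift p1)"
  have X1e: "X1 = herm (lift p4) (lift p2) * herm (lift p3) (lift p1) / (herm (lift p4) (lift p1) * herm (lift p3) (lift p2))"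
    by (simp add: X1_def crossratio_def)
  have X2e: "X2 = herm (lift p4) (lift p3) * herm (lift p2) (lift p1) / (herm (lift p4) (lift p1) * herm (lift p2) (lift p3))"
    by (simp add: X2_def crossratio_def)
  have Ae: "cartan p1 p2 p3 = Arg w" by (simp add: cartan_def w_def)
  note R' = R[folded X1e X2e w_def]
  have wnz: "w \<noteq> 0" using nz nz' by (simp add: w_def)
  have X1nz: "X1 \<noteq> 0" using nz nz' by (simp add: X1e)
  have X2nz: "X2 \<noteq> 0" using nz nz' by (simp add: X2e)
  have ar: "Arg (X1 / X2) \<noteq> 2 * Arg w"
  proof
    assume a: "Arg (X1 / X2) = 2 * Arg w"
    have "X1 / X2 = complex_of_real (cmod (X1 / X2)) * exp (\<i> * complex_of_real (Arg (X1 / X2)))"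
      using Arg_eq[of "X1 / X2"] X1nz X2nz by simp
    also have "\<i> * complex_of_real (Arg (X1 / X2)) = 2 * \<i> * complex_of_real (Arg w)" unfolding a by simp
    finally have e0: "X1 / X2 = complex_of_real (cmod (X1 / X2)) * exp (2 * \<i> * complex_of_real (Arg w))" .
    define r where "r = cmod (X1 / X2)"
    have e: "X1 / X2 = complex_of_real r * exp (2 * \<i> * complex_of_real (Arg w))" using e0 by (simp only: r_def)
    have "herm (lift p4) (lift p2) * herm (lift p1) (lift p3) / (herm (lift p4) (lift p3) * herm (lift p1) (lift p2))
        = X1 / X2 * (cnj w / w)" by (rule R'(5)[symmetric])
    also have "\<dots> = complex_of_real r * (exp (2 * \<i> * complex_of_real (Arg w)) * (cnj w / w))"
      unfolding e by (simp only: mult.assoc)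
    also have "\<dots> = complex_of_real r" unfolding exp_facts(3)[OF wnz] by simp
    finally have q: "herm (lift p4) (lift p2) * herm (lift p1) (lift p3) = complex_of_real r * (herm (lift p4) (lift p3) * herm (lift p1) (lift p2))"
      using nz nz' by (simp add: field_simps)
    have "in_stab_orbit p2 p3 p1 p4"
      by (rule orbit_from[OF d nz'(5) nz(1) _ q]) (use X1nz X2nz in \<open>simp add: r_def\<close>)
    thus False using D by blast
  qed
  show ?thesis unfolding Let_def X1_def[symmetric] X2_def[symmetric] Ae
    using R'(1-4) ar by blast
qed



lemma alg_g13:
  fixes h12 h21 h13 h23 h32 k12 k21 k13 k23 k32 r tt :: complex
  assumes nz: "r \<noteq> 0" "k12 \<noteq> 0" "k21 \<noteq> 0" "k23 \<noteq> 0" "k32 \<noteq> 0" "h21 \<noteq> 0" "h32 \<noteq> 0"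
    and rr: "r*r*(k12*k21*k23*k32) = tt*(h12*h21*h23*h32)"
    and uu: "k21*k32*k13 = tt*(h21*h32*h13)"
  shows "h12/(r*k12) * (h23/(r*k23)) * k13 = h13"
proof -
  have "h12/(r*k12) * (h23/(r*k23)) * k13 = (h12*h23*k13*(k21*k32)) / (r*r*(k12*k21*k23*k32))"
    using nz by (simp add: field_simps)
  also have "\<dots> = (h12*h23*(tt*(h21*h32*h13))) / (tt*(h12*h21*h23*h32))"
    unfolding rr using uu by (simp add: mult_ac)
  also have "\<dots> = h13"
  proof -
    have "tt*(h12*h21*h23*h32) \<noteq> 0" using rr nz by (metis mult_eq_0_iff)
    thus ?thesis by (simp add: field_simps)
  qed
  finally show ?thesis .
qed

lemma alg_j2:
  fixes h12 h21 h23 h31 h32 h41 h42 k12 k21 k23 k31 k32 k41 k42 r tt :: complex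
  assumes nz: "r \<noteq> 0" "k12 \<noteq> 0" "k21 \<noteq> 0" "k23 \<noteq> 0" "k32 \<noteq> 0" "h21 \<noteq> 0" "h32 \<noteq> 0" "h31 \<noteq> 0"
      "k41 \<noteq> 0" "h41 \<noteq> 0"
    and rr: "r*r*(k12*k21*k23*k32) = tt*(h12*h21*h23*h32)"
    and uu: "k12*k23*k31 = tt*(h12*h23*h31)"
    and x1: "h42*h31/(h41*h32) = k42*k31/(k41*k32)"
  shows "h41/((h21/(r*k21))*k41) * r * k42 = h42"
proof -
  have x1': "h42*h31*k41*k32 = k42*k31*h41*h32" using x1 nz by (simp add: field_simps)
  have "h41/((h21/(r*k21))*k41) * r * k42 = (r*r*(k12*k21*k23*k32)) * h41 * k42 / (h21*k41*k12*k23*k32)"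
    using nz by (simp add: field_simps)
  also have "\<dots> = (tt*(h12*h23*h31)) * h21*h32*h41*k42 / (h21*k41*k12*k23*k32*h31)"
    unfolding rr using nz by (simp add: field_simps)
  also have "\<dots> = (k12*k23*k31) * h21*h32*h41*k42 / (h21*k41*k12*k23*k32*h31)"
    unfolding uu ..
  also have "\<dots> = (k42*k31*h41*h32) / (k41*k32*h31)"
    using nz by (simp add: field_simps)
  also have "\<dots> = h42" unfolding x1'[symmetric] using nz by (simp add: field_simps)
  finally show ?thesis .
qed

lemma alg_j3:
  fixes h21 h23 h41 h43 k21 k23 k41 k43 r :: complex
  assumes nz: "r \<noteq> 0" "k21 \<noteq> 0" "k23 \<noteq> 0" "h21 \<noteq> 0" "h23 \<noteq> 0" "k41 \<noteq> 0" "h41 \<noteq> 0"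
    and x2: "h43*h21/(h41*h23) = k43*k21/(k41*k23)"
  shows "h41/((h21/(r*k21))*k41) * (h23/(r*k23)) * k43 = h43"
proof -
  have x2': "h43*h21*k41*k23 = k43*k21*h41*h23" using x2 nz by (simp add: field_simps)
  have "h41/((h21/(r*k21))*k41) * (h23/(r*k23)) * k43 = (k43*k21*h41*h23) / (h21*k41*k23)"
    using nz by (simp add: field_simps)
  also have "\<dots> = h43" unfolding x2'[symmetric] using nz by (simp add: field_simps)
  finally show ?thesis .
qed

lemma arg_eq_ratio:
  assumes "a \<noteq> 0" "b \<noteq> 0" "Arg a = Arg b"
  shows "b = complex_of_real (cmod b / cmod a) * a"
proof -
  define ra where "ra = cmod a"
  define th where "th = Arg a"
  have ea: "a = complex_of_real ra * exp (\<i> * complex_of_real th)"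
    using Arg_eq[OF assms(1)] by (simp add: ra_def th_def)
  have eb: "b = complex_of_real (cmod b) * exp (\<i> * complex_of_real th)"
    using Arg_eq[OF assms(2)] assms(3) by (simp add: th_def)
  have rap: "ra \<noteq> 0" using assms(1) by (simp add: ra_def)
  have "complex_of_real (cmod b / ra) * a = complex_of_real (cmod b / ra) * (complex_of_real ra * exp (\<i> * complex_of_real th))"
    by (subst ea) (rule refl)
  also have "\<dots> = complex_of_real (cmod b) * exp (\<i> * complex_of_real th)"
    using rap by (simp add: field_simps)
  also have "\<dots> = b" using eb by simp
  finally show ?thesis by (simp add: ra_def)
qed



lemma inj_core:
  assumes P: "(p1, p2, p3, p4) \<in> C4pp" and Q: "(q1, q2, q3, q4) \<in> C4pp"
    and eq: "B0 (p1, p2, p3, p4) = B0 (q1, q2, q3, q4)"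
  shows "\<exists>A\<in>U21. maps_to A p1 q1 \<and> maps_to A p2 q2 \<and> maps_to A p3 q3 \<and> maps_to A p4 q4"
proof -
  note DP = C4ppD[OF P] and DQ = C4ppD[OF Q]
  have dP: "det3 (lift p1) (lift p2) (lift p3) \<noteq> 0" using notC_det DP by blast
  have dQ: "det3 (lift q1) (lift q2) (lift q3) \<noteq> 0" using notC_det DQ by blast
  define h12 where "h12 = herm (lift p1) (lift p2)"
  define h21 where "h21 = herm (lift p2) (lift p1)"
  define h13 where "h13 = herm (lift p1) (lift p3)"
  define h31 where "h31 = herm (lift p3) (lift p1)"
  define h23 where "h23 = herm (lift p2) (lift p3)"
  define h32 where "h32 = herm (lift p3) (lift p2)"
  define h41 where "h41 = herm (lift p4) (lift p1)"
  define h42 where "h42 = herm (lift p4) (lift p2)"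
  define h43 where "h43 = herm (lift p4) (lift p3)"
  define k12 where "k12 = herm (lift q1) (lift q2)"
  define k21 where "k21 = herm (lift q2) (lift q1)"
  define k13 where "k13 = herm (lift q1) (lift q3)"
  define k31 where "k31 = herm (lift q3) (lift q1)"
  define k23 where "k23 = herm (lift q2) (lift q3)"
  define k32 where "k32 = herm (lift q3) (lift q2)"
  define k41 where "k41 = herm (lift q4) (lift q1)"
  define k42 where "k42 = herm (lift q4) (lift q2)"
  define k43 where "k43 = herm (lift q4) (lift q3)"
  have hnz: "h12 \<noteq> 0" "h21 \<noteq> 0" "h13 \<noteq> 0" "h31 \<noteq> 0" "h23 \<noteq> 0" "h32 \<noteq> 0" "h41 \<noteq> 0" "h42 \<noteq> 0" "h43 \<noteq> 0"
    using DP herm_lift_nz unfolding h12_def h21_def h13_def h31_def h23_def h32_def h41_def h42_def h43_def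
    by (metis)+
  have knz: "k12 \<noteq> 0" "k21 \<noteq> 0" "k13 \<noteq> 0" "k31 \<noteq> 0" "k23 \<noteq> 0" "k32 \<noteq> 0" "k41 \<noteq> 0" "k42 \<noteq> 0" "k43 \<noteq> 0"
    using DQ herm_lift_nz unfolding k12_def k21_def k13_def k31_def k23_def k32_def k41_def k42_def k43_def
    by (metis)+
  have ch: "h21 = cnj h12" "h31 = cnj h13" "h32 = cnj h23"
    unfolding h12_def h21_def h13_def h31_def h23_def h32_def by (rule herm_conj)+
  have ck: "k21 = cnj k12" "k31 = cnj k13" "k32 = cnj k23"
    unfolding k12_def k21_def k13_def k31_def k23_def k32_def by (rule herm_conj)+
  have x1: "h42*h31/(h41*h32) = k42*k31/(k41*k32)"
    using eq unfolding B0_def crossratio_def h42_def h31_def h41_def h32_def k42_def k31_def k41_def k32_def by simp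
  have x2: "h43*h21/(h41*h23) = k43*k21/(k41*k23)"
    using eq unfolding B0_def crossratio_def h43_def h21_def h41_def h23_def k43_def k21_def k41_def k23_def by simp
  have ca: "Arg (- h12 * h23 * h31) = Arg (- k12 * k23 * k31)"
    using eq unfolding B0_def cartan_def h12_def h23_def h31_def k12_def k23_def k31_def by simp
  define tt where "tt = cmod (- k12 * k23 * k31) / cmod (- h12 * h23 * h31)"
  have tt: "tt > 0" using hnz knz by (simp add: tt_def)
  have uu0: "- k12 * k23 * k31 = complex_of_real tt * (- h12 * h23 * h31)"
    unfolding tt_def by (rule arg_eq_ratio) (use hnz knz ca in simp_all)
  have uu: "k12*k23*k31 = complex_of_real tt * (h12*h23*h31)" using uu0 by simp
  have uuc: "k21*k32*k13 = complex_of_real tt * (h21*h32*h13)"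
    using arg_cong[OF uu, of cnj] by (simp add: ch ck)
  define \<rho> where "\<rho> = sqrt tt * cmod h12 * cmod h23 / (cmod k12 * cmod k23)"
  have \<rho>: "\<rho> > 0" using tt hnz knz by (simp add: \<rho>_def)
  define r where "r = complex_of_real \<rho>"
  have rnz: "r \<noteq> 0" using \<rho> by (simp add: r_def)
  have cr: "cnj r = r" by (simp add: r_def)
  have rr: "r*r*(k12*k21*k23*k32) = complex_of_real tt*(h12*h21*h23*h32)"
  proof -
    have "\<rho> * \<rho> * ((cmod k12)\<^sup>2 * (cmod k23)\<^sup>2) = tt * ((cmod h12)\<^sup>2 * (cmod h23)\<^sup>2)"
      using tt knz unfolding \<rho>_def by (simp add: field_simps power2_eq_square)
    hence "complex_of_real (\<rho> * \<rho> * ((cmod k12)\<^sup>2 * (cmod k23)\<^sup>2)) = complex_of_real (tt * ((cmod h12)\<^sup>2 * (cmod h23)\<^sup>2))"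
      by simp
    thus ?thesis unfolding r_def ch ck of_real_mult mcnj[symmetric] by (simp add: mult_ac)
  qed
  define c1 where "c1 = h12 / (r * k12)"
  define c3 where "c3 = h32 / (r * k32)"
  define c4 where "c4 = h41 / (cnj c1 * k41)"
  have cc1: "cnj c1 = h21 / (r * k21)" by (simp add: c1_def ch ck cr)
  have cc3: "cnj c3 = h23 / (r * k23)" by (simp add: c3_def ch ck cr)
  have c1nz: "c1 \<noteq> 0" using hnz knz rnz by (simp add: c1_def)
  have c3nz: "c3 \<noteq> 0" using hnz knz rnz by (simp add: c3_def)
  have c4nz: "c4 \<noteq> 0" using hnz knz rnz by (simp add: c4_def cc1)
  define W1 where "W1 = c1 *s lift q1"
  define W2 where "W2 = r *s lift q2"
  define W3 where "W3 = c3 *s lift q3"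
  have g11: "herm W1 W1 = herm (lift p1) (lift p1)" by (simp add: W1_def herm_smult_left herm_smult_right lift_null)
  have g22: "herm W2 W2 = herm (lift p2) (lift p2)" by (simp add: W2_def herm_smult_left herm_smult_right lift_null)
  have g33: "herm W3 W3 = herm (lift p3) (lift p3)" by (simp add: W3_def herm_smult_left herm_smult_right lift_null)
  have g12: "herm W1 W2 = herm (lift p1) (lift p2)"
    unfolding W1_def W2_def herm_smult_left herm_smult_right k12_def[symmetric] h12_def[symmetric] cr
    using rnz knz by (simp add: c1_def)
  have g23: "herm W2 W3 = herm (lift p2) (lift p3)"
    unfolding W2_def W3_def herm_smult_left herm_smult_right k23_def[symmetric] h23_def[symmetric] cc3
    using rnz knz by simp
  have g13: "herm W1 W3 = herm (lift p1) (lift p3)"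
    unfolding W1_def W3_def herm_smult_left herm_smult_right k13_def[symmetric] h13_def[symmetric] cc3
    unfolding c1_def using alg_g13[OF rnz knz(1) knz(2) knz(5) knz(6) hnz(2) hnz(6) rr uuc] by (simp add: mult_ac)
  obtain A where A: "A \<in> U21" "A *v lift p1 = W1" "A *v lift p2 = W2" "A *v lift p3 = W3"
    using gram_lemma[OF dP g11 g22 g33 g12 g13 g23] by blast
  have dW: "det3 W1 W2 W3 \<noteq> 0" unfolding W1_def W2_def W3_def det3_smult using dQ c1nz c3nz rnz by simp
  have j1: "herm (A *v lift p4 - c4 *s lift q4) W1 = 0"
  proof -
    have "herm (A *v lift p4) W1 = h41" unfolding A(2)[symmetric] U21_herm[OF A(1)] h41_def ..
    moreover have "herm (c4 *s lift q4) W1 = h41"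
      unfolding W1_def herm_smult_left herm_smult_right k41_def[symmetric] c4_def
      using c1nz knz by simp
    ultimately show ?thesis by (simp add: herm_diff_left)
  qed
  have j2: "herm (A *v lift p4 - c4 *s lift q4) W2 = 0"
  proof -
    have "herm (A *v lift p4) W2 = h42" unfolding A(3)[symmetric] U21_herm[OF A(1)] h42_def ..
    moreover have "herm (c4 *s lift q4) W2 = h42"
      unfolding W2_def herm_smult_left herm_smult_right k42_def[symmetric] c4_def cc1 cr
      using alg_j2[OF rnz knz(1) knz(2) knz(5) knz(6) hnz(2) hnz(6) hnz(4) knz(7) hnz(7) rr uu x1] by (simp add: mult_ac)
    ultimately show ?thesis by (simp add: herm_diff_left)
  qed
  have j3: "herm (A *v lift p4 - c4 *s lift q4) W3 = 0"
  proof -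
    have "herm (A *v lift p4) W3 = h43" unfolding A(4)[symmetric] U21_herm[OF A(1)] h43_def ..
    moreover have "herm (c4 *s lift q4) W3 = h43"
      unfolding W3_def herm_smult_left herm_smult_right k43_def[symmetric] c4_def cc1 cc3
      using alg_j3[OF rnz knz(2) knz(5) hnz(2) hnz(5) knz(7) hnz(7) x2] rnz by (simp add: mult_ac)
    ultimately show ?thesis by (simp add: herm_diff_left)
  qed
  have A4: "A *v lift p4 = c4 *s lift q4"
    using nondeg[OF dW j1 j2 j3] by simp
  have "maps_to A p1 q1" unfolding maps_to_def using A(2) c1nz W1_def by blast
  moreover have "maps_to A p2 q2" unfolding maps_to_def using A(3) rnz W2_def by blast
  moreover have "maps_to A p3 q3" unfolding maps_to_def using A(4) c3nz W3_def by blast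
  moreover have "maps_to A p4 q4" unfolding maps_to_def using A4 c4nz by blast
  ultimately show ?thesis using A(1) by blast
qed



lemma orbit_Arg:
  assumes ne: "p1 \<noteq> p2" "p1 \<noteq> p3" "p1 \<noteq> p4" "p2 \<noteq> p3" "p2 \<noteq> p4" "p3 \<noteq> p4"
    and d: "det3 (lift p1) (lift p2) (lift p3) \<noteq> 0" and d2: "det3 (lift p2) (lift p3) (lift p4) \<noteq> 0"
    and o: "in_stab_orbit p2 p3 p1 p4"
  shows "Arg (crossratio p1 p2 p3 p4 / crossratio p1 p3 p2 p4) = 2 * cartan p1 p2 p3"
proof -
  have nz: "herm (lift p1) (lift p2) \<noteq> 0" "herm (lift p1) (lift p3) \<noteq> 0" "herm (lift p1) (lift p4) \<noteq> 0"
    "herm (lift p2) (lift p3) \<noteq> 0" "herm (lift p2) (lift p4) \<noteq> 0" "herm (lift p3) (lift p4) \<noteq> 0"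
    using ne herm_lift_nz by auto
  have nz': "herm (lift p4) (lift p3) \<noteq> 0" "herm (lift p1) (lift p2) \<noteq> 0"
    using ne herm_lift_nz by auto
  note R = part1_vec[OF lift_null lift_null lift_null lift_null nz d d2]
  define X1 where "X1 = crossratio p1 p2 p3 p4"
  define X2 where "X2 = crossratio p1 p3 p2 p4"
  define w where "w = - herm (lift p1) (lift p2) * herm (lift p2) (lift p3) * herm (lift p3) (lift p1)"
  have X1e: "X1 = herm (lift p4) (lift p2) * herm (lift p3) (lift p1) / (herm (lift p4) (lift p1) * herm (lift p3) (lift p2))"
    by (simp add: X1_def crossratio_def)
  have X2e: "X2 = herm (lift p4) (lift p3) * herm (lift p2) (lift p1) / (herm (lift p4) (lift p1) * herm (lift p2) (lift p3))"
    by (simp add: X2_def crossratio_def)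
  have Ae: "cartan p1 p2 p3 = Arg w" by (simp add: cartan_def w_def)
  note R' = R[folded X1e X2e w_def]
  have wnz: "w \<noteq> 0" using nz by (simp add: w_def herm_conj[of "lift p3" "lift p1"])
  obtain r where r: "r > 0" "herm (lift p4) (lift p2) * herm (lift p1) (lift p3) = complex_of_real r * (herm (lift p4) (lift p3) * herm (lift p1) (lift p2))"
    using orbit_to[OF o nz(4)] by blast
  have "X1 / X2 * (cnj w / w) = complex_of_real r"
    unfolding R'(5) using r(2) nz' by (simp add: field_simps)
  hence "X1 / X2 * (cnj w / w) * exp (2 * \<i> * complex_of_real (Arg w)) = complex_of_real r * exp (2 * \<i> * complex_of_real (Arg w))"
    by simp
  hence "X1 / X2 = complex_of_real r * exp (\<i> * complex_of_real (2 * Arg w))"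
    using exp_facts(3)[OF wnz] by (simp add: mult_ac)
  hence "Arg (X1 / X2) = 2 * Arg w"
    by (intro Arg_unique[OF sym r(1)]) (use R'(1) in auto)
  thus ?thesis unfolding X1_def X2_def Ae .
qed



lemma alg_B:
  fixes E cE D w1 cw2 cD N c2 :: complex
  assumes "D \<noteq> 0" "E * cE = 1" "E + cE = c2" "w1 = - E / D" "D * cD = N" "N \<noteq> 0"
  shows "w1 * cw2 * (1 + cE * cE) = - c2 * (cw2 * cD) / N"
proof -
  have "w1 * cw2 * (1 + cE * cE) = - cw2 * (E + (E * cE) * cE) / D" unfolding assms(4) using assms(1) by (simp add: field_simps)
  also have "\<dots> = - cw2 * c2 / D" using assms(2,3) by simp
  also have "\<dots> = - c2 * (cw2 * cD) / N" using assms(1,5,6) by (auto simp: field_simps)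
  finally show ?thesis .
qed

lemma Re_ofreal_mult: "Re (complex_of_real r * z) = r * Re z" by simp

lemma lift00: "lift (Some (0, 0)) = vector [0, 0, 1]"
  by (simp add: lift_Some)

lemma surj_core:
  assumes V: "(w1, w2, a) \<in> V4"
  shows "\<exists>P\<in>C4pp. B0 P = (w1, w2, a)"
proof -
  have a: "a \<in> {-pi/2<..<pi/2}"
    and eqV: "(cmod (w1 + w2 - 1))\<^sup>2 = 2 * Re (w1 * cnj w2 * (1 + exp (- 2 * \<i> * complex_of_real a)))"
    and nzV: "w1 + w2 - 1 \<noteq> 0"
    and pos: "Re (w1 * cnj w2 * exp (- \<i> * complex_of_real a)) > 0"
    and argc: "Arg (w1 / w2) \<noteq> 2 * a"
    using V unfolding V4_def by auto
  have w1nz: "w1 \<noteq> 0" using pos by auto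
  have w2nz: "w2 \<noteq> 0" using pos by auto
  define c where "c = cos a"
  have cpos: "c > 0" unfolding c_def using a by (auto intro!: cos_gt_zero_pi)
  define sc where "sc = sqrt c"
  have sc: "sc > 0" "sc * sc = c" using cpos by (simp_all add: sc_def)
  define E where "E = exp (\<i> * complex_of_real a)"
  have Ee: "E = complex_of_real (cos a) + \<i> * complex_of_real (sin a)"
    by (simp add: E_def complex_eq_iff Re_exp Im_exp)
  have cE: "cnj E = complex_of_real (cos a) - \<i> * complex_of_real (sin a)"
    by (simp add: Ee)
  have EcE: "E * cnj E = 1" unfolding Ee cE
    by (simp add: complex_eq_iff power2_eq_square[symmetric])
  have EpcE: "E + cnj E = complex_of_real (2 * c)" unfolding Ee cE c_def by (simp add: complex_eq_iff)
  have Enz: "E \<noteq> 0" using EcE by auto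
  have e2: "exp (- 2 * \<i> * complex_of_real a) = cnj E * cnj E"
  proof -
    have "cnj E = exp (- \<i> * complex_of_real a)" by (simp add: E_def exp_cnj)
    moreover have "exp (- 2 * \<i> * complex_of_real a) = exp (- \<i> * complex_of_real a) * exp (- \<i> * complex_of_real a)"
    proof -
      have s: "- 2 * \<i> * complex_of_real a = (- \<i> * complex_of_real a) + (- \<i> * complex_of_real a)" by simp
      show ?thesis unfolding s by (rule exp_add)
    qed
    ultimately show ?thesis by simp
  qed
  define D where "D = - E / w1"
  have Dnz: "D \<noteq> 0" using Enz w1nz by (simp add: D_def)
  have w1e: "w1 = - E / D" using Enz w1nz by (simp add: D_def field_simps)
  define z4 where "z4 = (D - w2 * D + E) / (2 * complex_of_real sc)"
  have z4e: "2 * complex_of_real sc * z4 = D - w2 * D + E" using sc by (simp add: z4_def)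
  define t4 where "t4 = Im (w2 * D)"
  have Aeq: "w1 + w2 - 1 = - (2 * complex_of_real sc * z4) / D"
    unfolding z4e w1e using Dnz by (simp add: field_simps)
  have z4nz: "z4 \<noteq> 0" using nzV Aeq by auto
  have DcD: "D * cnj D = complex_of_real ((cmod D)\<^sup>2)" by (rule mcnj)
  have Dpos: "(cmod D)\<^sup>2 > 0" using Dnz by simp
  have Beq: "w1 * cnj w2 * (1 + exp (- 2 * \<i> * complex_of_real a)) = - complex_of_real (2 * c) * (cnj w2 * cnj D) / complex_of_real ((cmod D)\<^sup>2)"
    unfolding e2 by (rule alg_B[OF Dnz EcE EpcE w1e DcD]) (use Dpos in simp)
  have reB: "Re (w1 * cnj w2 * (1 + exp (- 2 * \<i> * complex_of_real a))) = - (2 * c) * Re (w2 * D) / (cmod D)\<^sup>2"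
  proof -
    have "- complex_of_real (2 * c) * (cnj w2 * cnj D) / complex_of_real ((cmod D)\<^sup>2) = complex_of_real (- (2 * c) / (cmod D)\<^sup>2) * cnj (w2 * D)"
      by simp
    hence "Re (w1 * cnj w2 * (1 + exp (- 2 * \<i> * complex_of_real a))) = Re (complex_of_real (- (2 * c) / (cmod D)\<^sup>2) * cnj (w2 * D))"
      unfolding Beq by simp
    also have "\<dots> = (- (2 * c) / (cmod D)\<^sup>2) * Re (cnj (w2 * D))" by (rule Re_ofreal_mult)
    also have "\<dots> = - (2 * c) * Re (w2 * D) / (cmod D)\<^sup>2" by simp
    finally show ?thesis .
  qed
  have cmA: "(cmod (w1 + w2 - 1))\<^sup>2 = 4 * c * (cmod z4)\<^sup>2 / (cmod D)\<^sup>2"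
    unfolding Aeq using sc by (simp add: norm_divide norm_mult power_divide power_mult_distrib power2_eq_square)
  have key: "(cmod z4)\<^sup>2 = - Re (w2 * D)"
  proof -
    have "4 * c * (cmod z4)\<^sup>2 / (cmod D)\<^sup>2 = 2 * (- (2 * c) * Re (w2 * D) / (cmod D)\<^sup>2)"
      using eqV unfolding cmA reB .
    hence "4 * c * (cmod z4)\<^sup>2 = 4 * c * (- Re (w2 * D))" using Dpos by (simp add: field_simps)
    thus ?thesis using cpos by simp
  qed
  define p1 where "p1 = Some (complex_of_real sc, sin a)"
  define p2 where "p2 = (None :: bpt)"
  define p3 where "p3 = Some (0::complex, 0::real)"
  define p4 where "p4 = Some (z4, t4)"
  have sc2: "complex_of_real sc * complex_of_real sc = complex_of_real (cos a)"
    unfolding of_real_mult[symmetric] sc(2) c_def ..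
  have l1: "lift p1 = vector [- cnj E, complex_of_real (sqrt 2) * complex_of_real sc, 1]"
    unfolding p1_def lift_Some cE using sc by (simp add: power2_eq_square sc2 c_def)
  have l2: "lift p2 = vector [1, 0, 0]" by (simp add: p2_def lift_None)
  have l3: "lift p3 = vector [0, 0, 1]" by (simp add: p3_def lift00)
  have l4_1: "lift p4 $ 1 = w2 * D"
    unfolding p4_def lift1_Some key t4_def by (simp add: complex_eq_iff)
  have l4_2: "lift p4 $ 2 = complex_of_real (sqrt 2) * z4" unfolding p4_def by (rule lift2_Some)
  have l4_3: "lift p4 $ 3 = 1" by (simp add: p4_def lift3)
  have h12: "herm (lift p1) (lift p2) = 1" unfolding l1 l2 herm_def by simp
  have h21: "herm (lift p2) (lift p1) = 1" unfolding l1 l2 herm_def by simp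
  have h23: "herm (lift p2) (lift p3) = 1" unfolding l3 l2 herm_def by simp
  have h32: "herm (lift p3) (lift p2) = 1" unfolding l3 l2 herm_def by simp
  have h31: "herm (lift p3) (lift p1) = - E" unfolding l1 l3 herm_def by simp
  have h42: "herm (lift p4) (lift p2) = 1" unfolding l2 herm_def using l4_3 by simp
  have h43: "herm (lift p4) (lift p3) = w2 * D" unfolding l3 herm_def using l4_1 by simp
  have h41: "herm (lift p4) (lift p1) = D"
  proof -
    have "herm (lift p4) (lift p1) = w2 * D + complex_of_real (sqrt 2) * z4 * cnj (complex_of_real (sqrt 2) * complex_of_real sc) - E"
      unfolding herm_def l4_1 l4_2 l4_3 l1 by simp
    also have "\<dots> = w2 * D + 2 * complex_of_real sc * z4 - E"
      using sq2mul[of z4 "complex_of_real sc"] by (simp add: mult_ac)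
    also have "\<dots> = D" unfolding z4e by simp
    finally show ?thesis .
  qed
  have cr1: "crossratio p1 p2 p3 p4 = w1"
    unfolding crossratio_def h42 h31 h41 h32 w1e by simp
  have cr2: "crossratio p1 p3 p2 p4 = w2"
    unfolding crossratio_def h43 h21 h41 h23 using Dnz by simp
  have ca: "cartan p1 p2 p3 = a"
  proof -
    have "cartan p1 p2 p3 = Arg E" unfolding cartan_def h12 h23 h31 by simp
    also have "\<dots> = a" unfolding E_def using a by (subst Arg_exp) auto
    finally show ?thesis .
  qed
  have B0e: "B0 (p1, p2, p3, p4) = (w1, w2, a)" by (simp add: B0_def cr1 cr2 ca)
  have n14: "p1 \<noteq> p4"
  proof
    assume "p1 = p4"
    hence "herm (lift p4) (lift p1) = 0" by (simp add: lift_null)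
    thus False using h41 Dnz by simp
  qed
  have n34: "p3 \<noteq> p4"
  proof
    assume "p3 = p4"
    hence "herm (lift p4) (lift p3) = 0" by (simp add: lift_null)
    thus False using h43 Dnz w2nz by simp
  qed
  have n13: "p1 \<noteq> p3" using sc by (simp add: p1_def p3_def)
  have ne: "p1 \<noteq> p2" "p1 \<noteq> p3" "p1 \<noteq> p4" "p2 \<noteq> p3" "p2 \<noteq> p4" "p3 \<noteq> p4"
    using n14 n34 n13 by (auto simp: p1_def p2_def p3_def p4_def)
  have d: "det3 (lift p1) (lift p2) (lift p3) \<noteq> 0"
    unfolding l1 l2 l3 det3_def using sc by simp
  have d2: "det3 (lift p2) (lift p3) (lift p4) \<noteq> 0"
    unfolding l2 l3 det3_def using l4_2 z4nz by simp
  have nC1: "\<not> on_common_C_circle p1 p2 p3" using C1 d by blast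
  have nC2: "\<not> on_common_C_circle p2 p3 p4" using C1 d2 by blast
  have nO: "\<not> in_stab_orbit p2 p3 p1 p4"
  proof
    assume "in_stab_orbit p2 p3 p1 p4"
    from orbit_Arg[OF ne d d2 this] have "Arg (w1 / w2) = 2 * a" unfolding cr1 cr2 ca .
    thus False using argc by simp
  qed
  have "(p1, p2, p3, p4) \<in> C4pp" unfolding C4pp_def using ne nC1 nC2 nO by auto
  thus ?thesis using B0e by blast
qed



lemma mat1_U21: "mat 1 \<in> U21" by (simp add: U21_def)

lemma maps_to_id: "maps_to (mat 1) p p"
  unfolding maps_to_def by (rule exI[of _ 1]) simp

lemma U21_mult: "A \<in> U21 \<Longrightarrow> B \<in> U21 \<Longrightarrow> B ** A \<in> U21"
  by (simp add: U21_def matrix_vector_mul_assoc[symmetric])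

lemma maps_to_comp: "maps_to A p q \<Longrightarrow> maps_to B q r \<Longrightarrow> maps_to (B ** A) p r"
proof -
  assume "maps_to A p q" "maps_to B q r"
  then obtain c d where cd: "c \<noteq> 0" "A *v lift p = c *s lift q" "d \<noteq> 0" "B *v lift q = d *s lift r"
    unfolding maps_to_def by blast
  have "(B ** A) *v lift p = (c * d) *s lift r"
    by (simp add: matrix_vector_mul_assoc[symmetric] cd(2,4) vector_scalar_commute vector_smult_assoc mult.commute)
  thus "maps_to (B ** A) p r" unfolding maps_to_def using cd(1,3) by (intro exI[of _ "c * d"]) simp
qed

lemma rel_refl: "P \<in> C4pp \<Longrightarrow> (P, P) \<in> PU_rel"
  unfolding PU_rel_def PU_equiv_def
  by (cases P) (auto intro!: bexI[OF _ mat1_U21] simp: maps_to_id)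

lemma rel_trans: "(P, Q) \<in> PU_rel \<Longrightarrow> (Q, R) \<in> PU_rel \<Longrightarrow> (P, R) \<in> PU_rel"
proof -
  assume pq: "(P, Q) \<in> PU_rel" and qr: "(Q, R) \<in> PU_rel"
  obtain p1 p2 p3 p4 where P: "P = (p1, p2, p3, p4)" by (cases P) auto
  obtain q1 q2 q3 q4 where Q: "Q = (q1, q2, q3, q4)" by (cases Q) auto
  obtain r1 r2 r3 r4 where R: "R = (r1, r2, r3, r4)" by (cases R) auto
  from pq obtain A where A: "A \<in> U21" "maps_to A p1 q1" "maps_to A p2 q2" "maps_to A p3 q3" "maps_to A p4 q4"
    unfolding PU_rel_def PU_equiv_def P Q by auto
  from qr obtain B where B: "B \<in> U21" "maps_to B q1 r1" "maps_to B q2 r2" "maps_to B q3 r3" "maps_to B q4 r4"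
    unfolding PU_rel_def PU_equiv_def Q R by auto
  have "B ** A \<in> U21" using U21_mult[OF A(1) B(1)] .
  moreover have "maps_to (B ** A) p1 r1" "maps_to (B ** A) p2 r2" "maps_to (B ** A) p3 r3" "maps_to (B ** A) p4 r4"
    using A B maps_to_comp by blast+
  ultimately show ?thesis using pq qr unfolding PU_rel_def PU_equiv_def P R by auto
qed

lemma rel_B0: "(P, Q) \<in> PU_rel \<Longrightarrow> B0 P = B0 Q"
proof -
  assume pq: "(P, Q) \<in> PU_rel"
  obtain p1 p2 p3 p4 where P: "P = (p1, p2, p3, p4)" by (cases P) auto
  obtain q1 q2 q3 q4 where Q: "Q = (q1, q2, q3, q4)" by (cases Q) auto
  from pq obtain A where A: "A \<in> U21" "maps_to A p1 q1" "maps_to A p2 q2" "maps_to A p3 q3" "maps_to A p4 q4"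
    unfolding PU_rel_def PU_equiv_def P Q by auto
  show ?thesis unfolding P Q by (rule B0_inv[OF A])
qed

lemma rel_of_B0: "P \<in> C4pp \<Longrightarrow> Q \<in> C4pp \<Longrightarrow> B0 P = B0 Q \<Longrightarrow> (P, Q) \<in> PU_rel"
proof -
  assume P0: "P \<in> C4pp" and Q0: "Q \<in> C4pp" and e: "B0 P = B0 Q"
  obtain p1 p2 p3 p4 where P: "P = (p1, p2, p3, p4)" by (cases P) auto
  obtain q1 q2 q3 q4 where Q: "Q = (q1, q2, q3, q4)" by (cases Q) auto
  have "\<exists>A\<in>U21. maps_to A p1 q1 \<and> maps_to A p2 q2 \<and> maps_to A p3 q3 \<and> maps_to A p4 q4"
    by (rule inj_core) (use P0 Q0 e P Q in auto)
  thus ?thesis using P0 Q0 unfolding PU_rel_def PU_equiv_def P Q by auto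
qed

lemma class_image: "P \<in> C4pp \<Longrightarrow> B0 ` (PU_rel `` {P}) = {B0 P}"
proof -
  assume P: "P \<in> C4pp"
  have "P \<in> PU_rel `` {P}" using rel_refl[OF P] by simp
  moreover have "\<And>Q. Q \<in> PU_rel `` {P} \<Longrightarrow> B0 Q = B0 P" using rel_B0 by (metis Image_singleton_iff)
  ultimately show ?thesis by blast
qed

theorem mainTheorem7:
  shows "(\<forall>p1 p2 p3 p4. (p1, p2, p3, p4) \<in> C4pp \<longrightarrow>
            (let X1 = crossratio p1 p2 p3 p4; X2 = crossratio p1 p3 p2 p4; A = cartan p1 p2 p3 in
              A \<in> {-pi/2<..<pi/2} \<and>
              (cmod (X1 + X2 - 1))\<^sup>2 = 2 * Re (X1 * cnj X2 * (1 + exp (- 2 * \<i> * complex_of_real A))) \<and>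
              X1 + X2 - 1 \<noteq> 0 \<and>
              Re (X1 * cnj X2 * exp (- \<i> * complex_of_real A)) > 0 \<and>
              Arg (X1 / X2) \<noteq> 2 * A))
       \<and> B0 respects PU_rel
       \<and> bij_betw (\<lambda>c. the_elem (B0 ` c)) F4pp V4"
proof (intro conjI)
  show "\<forall>p1 p2 p3 p4. (p1, p2, p3, p4) \<in> C4pp \<longrightarrow>
            (let X1 = crossratio p1 p2 p3 p4; X2 = crossratio p1 p3 p2 p4; A = cartan p1 p2 p3 in
              A \<in> {-pi/2<..<pi/2} \<and>
              (cmod (X1 + X2 - 1))\<^sup>2 = 2 * Re (X1 * cnj X2 * (1 + exp (- 2 * \<i> * complex_of_real A))) \<and>
              X1 + X2 - 1 \<noteq> 0 \<and>
              Re (X1 * cnj X2 * exp (- \<i> * complex_of_real A)) > 0 \<and>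
              Arg (X1 / X2) \<noteq> 2 * A)"
    using part1 by blast
  show "B0 respects PU_rel" unfolding congruent_def using rel_B0 by blast
  have cls: "\<And>c. c \<in> F4pp \<Longrightarrow> \<exists>P\<in>C4pp. c = PU_rel `` {P}"
    unfolding F4pp_def quotient_def by blast
  have val: "\<And>P. P \<in> C4pp \<Longrightarrow> the_elem (B0 ` (PU_rel `` {P})) = B0 P"
    using class_image by simp
  have inB: "\<And>P. P \<in> C4pp \<Longrightarrow> PU_rel `` {P} \<in> F4pp"
    unfolding F4pp_def by (rule quotientI)
  have V: "\<And>P. P \<in> C4pp \<Longrightarrow> B0 P \<in> V4"
  proof -
    fix P assume P: "P \<in> C4pp"
    obtain p1 p2 p3 p4 where Pe: "P = (p1, p2, p3, p4)" by (cases P) auto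
    show "B0 P \<in> V4" using part1[of p1 p2 p3 p4] P unfolding Pe B0_def V4_def Let_def by auto
  qed
  show "bij_betw (\<lambda>c. the_elem (B0 ` c)) F4pp V4"
    unfolding bij_betw_def
  proof (intro conjI)
    show "inj_on (\<lambda>c. the_elem (B0 ` c)) F4pp"
    proof (rule inj_onI)
      fix c d assume c: "c \<in> F4pp" and d: "d \<in> F4pp" and e: "the_elem (B0 ` c) = the_elem (B0 ` d)"
      obtain P where P: "P \<in> C4pp" "c = PU_rel `` {P}" using cls[OF c] by blast
      obtain Q where Q: "Q \<in> C4pp" "d = PU_rel `` {Q}" using cls[OF d] by blast
      have "B0 P = B0 Q" using e val P Q by simp
      hence pq: "(P, Q) \<in> PU_rel" and qp: "(Q, P) \<in> PU_rel" using rel_of_B0 P Q by auto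
      show "c = d" unfolding P(2) Q(2) using rel_trans pq qp by blast
    qed
    show "(\<lambda>c. the_elem (B0 ` c)) ` F4pp = V4"
    proof
      show "(\<lambda>c. the_elem (B0 ` c)) ` F4pp \<subseteq> V4"
      proof
        fix y assume "y \<in> (\<lambda>c. the_elem (B0 ` c)) ` F4pp"
        then obtain c where c: "c \<in> F4pp" "y = the_elem (B0 ` c)" by blast
        obtain P where P: "P \<in> C4pp" "c = PU_rel `` {P}" using cls[OF c(1)] by blast
        show "y \<in> V4" using c(2) P val V by simp
      qed
      show "V4 \<subseteq> (\<lambda>c. the_elem (B0 ` c)) ` F4pp"
      proof
        fix y assume y: "y \<in> V4"
        obtain w1 w2 a where ye: "y = (w1, w2, a)" by (cases y) auto
        obtain P where P: "P \<in> C4pp" "B0 P = y" using surj_core[of w1 w2 a] y ye by blast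
        have "the_elem (B0 ` (PU_rel `` {P})) = y" using val P by simp
        thus "y \<in> (\<lambda>c. the_elem (B0 ` c)) ` F4pp" using inB[OF P(1)] by force
      qed
    qed
  qed
qed


end
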